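(* Let $M>0$ and $\bar\alpha\ge0$. For any $f\in X_{\bar\alpha}$, \[ \big\||\partial_x|^{\frac56+\frac{\bar\alpha}2}I_M[f]\big\|_{L^2(\mathbb{R})}\le C\|f\|_{Y_{\bar\alpha}}, \] where $I_M[f](x)=\int_0^Mf(x,y)\,dy$ and $C$ is independent of $\bar\alpha$ and $f$.
   Context: $\Omega_M=\mathbb{R}\times[0,M]$; $|\partial_x|^s$ is the Fourier multiplier in $x$ with symbol $|\xi|^s$. $\|f\|_{Y_{\bar\alpha}}=\|y|\partial_x|^{\bar\alpha/2}\partial_xf\|_{L^2(\Omega_M)}+\||\partial_x|^{\frac23+\frac{\bar\alpha}2}f\|_{L^2(\Omega_M)}+\||\partial_x|^{\frac13+\frac{\bar\alpha}2}\partial_yf\|_{L^2(\Omega_M)}+\||\partial_x|^{\bar\alpha/2}\partial_y^2f\|_{L^2(\Omega_M)}+\||\partial_x|^{\frac{1+\bar\alpha}2}y^{1/2}\partial_yf\|_{L^2(\Omega_M)}$, $\|f\|_{X_{\bar\alpha}}=\|f\|_{L^2(\Omega_M)}+\||\partial_x|^{1/18}y^{1/6}f\|_{L^2(\Omega_M)}+\|f\|_{Y_{\bar\alpha}}$, and $X_{\bar\alpha}$ is the space where this is finite. *)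

theory Defs
  imports "HOL-Analysis.Analysis"
begin

text \<open>The strip Omega_M = R x [0,M]; points are pairs (x,y), on the Fourier side (xi,y).\<close>
definition strip :: "real \<Rightarrow> (real \<times> real) set" where
  "strip M = UNIV \<times> {0..M}"

definition trunc_ft :: "(real \<Rightarrow> complex) \<Rightarrow> real \<Rightarrow> real \<Rightarrow> complex" where
  "trunc_ft g R \<xi> = (LINT x:{-R..R}|lborel. g x * cis (- x * \<xi>))"

definition ft1 :: "(real \<Rightarrow> complex) \<Rightarrow> real \<Rightarrow> complex" where
  "ft1 g = (SOME h. h \<in> borel_measurable lborel \<and>
      (\<integral>\<^sup>+ \<xi>. ennreal ((cmod (h \<xi>))\<^sup>2) \<partial>lborel) < \<infinity> \<and>
      ((\<lambda>R. \<integral>\<^sup>+ \<xi>. ennreal ((cmod (trunc_ft g R \<xi> - h \<xi>))\<^sup>2) \<partial>lborel) \<longlongrightarrow> 0) at_top)"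

definition trunc_pft :: "(real \<Rightarrow> real \<Rightarrow> real) \<Rightarrow> real \<Rightarrow> real \<times> real \<Rightarrow> complex" where
  "trunc_pft f R z = (LINT x:{-R..R}|lborel. complex_of_real (f x (snd z)) * cis (- x * fst z))"

definition pft :: "real \<Rightarrow> (real \<Rightarrow> real \<Rightarrow> real) \<Rightarrow> real \<times> real \<Rightarrow> complex" where
  "pft M f = (SOME F. F \<in> borel_measurable lborel \<and>
      (\<integral>\<^sup>+ z \<in> strip M. ennreal ((cmod (F z))\<^sup>2) \<partial>lborel) < \<infinity> \<and>
      ((\<lambda>R. \<integral>\<^sup>+ z \<in> strip M. ennreal ((cmod (trunc_pft f R z - F z))\<^sup>2) \<partial>lborel) \<longlongrightarrow> 0) at_top)"

definition IM :: "real \<Rightarrow> (real \<Rightarrow> real \<Rightarrow> real) \<Rightarrow> real \<Rightarrow> real" where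
  "IM M f x = (LINT y:{0..M}|lborel. f x y)"

definition wsq :: "real \<Rightarrow> (real \<times> real \<Rightarrow> real) \<Rightarrow> (real \<times> real \<Rightarrow> complex) \<Rightarrow> ennreal" where
  "wsq M w G = (\<integral>\<^sup>+ z \<in> strip M. ennreal ((w z)\<^sup>2 * (cmod (G z))\<^sup>2) \<partial>lborel)"

definition wfin :: "real \<Rightarrow> (real \<times> real \<Rightarrow> real) \<Rightarrow> (real \<times> real \<Rightarrow> complex) \<Rightarrow> bool" where
  "wfin M w G \<longleftrightarrow> G \<in> borel_measurable lborel \<and> wsq M w G < \<infinity>"

text \<open>Physical-side L^2 norm via Plancherel: ||g||^2 = (1/(2 pi)) ||hat g||^2.\<close>
definition wnorm :: "real \<Rightarrow> (real \<times> real \<Rightarrow> real) \<Rightarrow> (real \<times> real \<Rightarrow> complex) \<Rightarrow> real" where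
  "wnorm M w G = sqrt (enn2real (wsq M w G) / (2 * pi))"

definition test1 :: "real \<Rightarrow> (real \<times> real \<Rightarrow> real) \<Rightarrow> (real \<times> real \<Rightarrow> real) \<Rightarrow> bool" where
  "test1 M \<phi> \<phi>1 \<longleftrightarrow>
     (\<exists>K. compact K \<and> K \<subseteq> UNIV \<times> {0<..<M} \<and> (\<forall>z. z \<notin> K \<longrightarrow> \<phi> z = 0)) \<and>
     continuous_on UNIV \<phi> \<and> continuous_on UNIV \<phi>1 \<and>
     (\<forall>\<xi> y. ((\<lambda>t. \<phi> (\<xi>, t)) has_real_derivative \<phi>1 (\<xi>, y)) (at y))"

definition test2 :: "real \<Rightarrow> (real \<times> real \<Rightarrow> real) \<Rightarrow> (real \<times> real \<Rightarrow> real) \<Rightarrow> (real \<times> real \<Rightarrow> real) \<Rightarrow> bool" where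
  "test2 M \<phi> \<phi>1 \<phi>2 \<longleftrightarrow> test1 M \<phi> \<phi>1 \<and> continuous_on UNIV \<phi>2 \<and>
     (\<forall>\<xi> y. ((\<lambda>t. \<phi>1 (\<xi>, t)) has_real_derivative \<phi>2 (\<xi>, y)) (at y))"

text \<open>Weak (distributional) statement  G = w(y) |xi|^s d_y F  on R x (0,M) (Fourier side of
  w(y) |d_x|^s d_y f).\<close>
definition weak_dy :: "real \<Rightarrow> (real \<times> real \<Rightarrow> real) \<Rightarrow> real \<Rightarrow> (real \<times> real \<Rightarrow> complex)
    \<Rightarrow> (real \<times> real \<Rightarrow> complex) \<Rightarrow> bool" where
  "weak_dy M w s F G \<longleftrightarrow> (\<forall>\<phi> \<phi>1. test1 M \<phi> \<phi>1 \<longrightarrow>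
     (LINT z:strip M|lborel. G z * complex_of_real (\<phi> z / w z)) =
     - (LINT z:strip M|lborel. complex_of_real (\<bar>fst z\<bar> powr s * \<phi>1 z) * F z))"

text \<open>Weak statement  G = |xi|^s d_y^2 F.\<close>
definition weak_dyy :: "real \<Rightarrow> real \<Rightarrow> (real \<times> real \<Rightarrow> complex) \<Rightarrow> (real \<times> real \<Rightarrow> complex) \<Rightarrow> bool" where
  "weak_dyy M s F G \<longleftrightarrow> (\<forall>\<phi> \<phi>1 \<phi>2. test2 M \<phi> \<phi>1 \<phi>2 \<longrightarrow>
     (LINT z:strip M|lborel. G z * complex_of_real (\<phi> z)) =
     (LINT z:strip M|lborel. complex_of_real (\<bar>fst z\<bar> powr s * \<phi>2 z) * F z))"

text \<open>Membership f in X_alpha, with G3 = hat of |d_x|^{1/3+a/2} d_y f,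
  G4 = hat of |d_x|^{a/2} d_y^2 f, G5 = hat of |d_x|^{(1+a)/2} y^{1/2} d_y f.\<close>
definition inX :: "real \<Rightarrow> real \<Rightarrow> (real \<Rightarrow> real \<Rightarrow> real) \<Rightarrow> (real \<times> real \<Rightarrow> complex)
    \<Rightarrow> (real \<times> real \<Rightarrow> complex) \<Rightarrow> (real \<times> real \<Rightarrow> complex) \<Rightarrow> bool" where
  "inX M a f G3 G4 G5 \<longleftrightarrow>
     (\<lambda>z. f (fst z) (snd z)) \<in> borel_measurable lborel \<and>
     (\<integral>\<^sup>+ z \<in> strip M. ennreal ((f (fst z) (snd z))\<^sup>2) \<partial>lborel) < \<infinity> \<and>
     wfin M (\<lambda>z. \<bar>fst z\<bar> powr (1/18) * snd z powr (1/6)) (pft M f) \<and>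
     wfin M (\<lambda>z. snd z * \<bar>fst z\<bar> powr (a/2) * \<bar>fst z\<bar>) (pft M f) \<and>
     wfin M (\<lambda>z. \<bar>fst z\<bar> powr (2/3 + a/2)) (pft M f) \<and>
     wfin M (\<lambda>z. 1) G3 \<and> weak_dy M (\<lambda>z. 1) (1/3 + a/2) (pft M f) G3 \<and>
     wfin M (\<lambda>z. 1) G4 \<and> weak_dyy M (a/2) (pft M f) G4 \<and>
     wfin M (\<lambda>z. 1) G5 \<and> weak_dy M (\<lambda>z. sqrt (snd z)) ((1 + a)/2) (pft M f) G5"

definition Ynorm :: "real \<Rightarrow> real \<Rightarrow> (real \<Rightarrow> real \<Rightarrow> real) \<Rightarrow> (real \<times> real \<Rightarrow> complex)
    \<Rightarrow> (real \<times> real \<Rightarrow> complex) \<Rightarrow> (real \<times> real \<Rightarrow> complex) \<Rightarrow> real" where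
  "Ynorm M a f G3 G4 G5 =
     wnorm M (\<lambda>z. snd z * \<bar>fst z\<bar> powr (a/2) * \<bar>fst z\<bar>) (pft M f) +
     wnorm M (\<lambda>z. \<bar>fst z\<bar> powr (2/3 + a/2)) (pft M f) +
     wnorm M (\<lambda>z. 1) G3 + wnorm M (\<lambda>z. 1) G4 + wnorm M (\<lambda>z. 1) G5"

end

theory Submission
  imports Defs "HOL-Probability.Characteristic_Functions"
begin

lemma gauss_integrable:
  fixes s :: real assumes s: "s > 0"
  shows "integrable lborel (\<lambda>\<xi>. exp (-((s*\<xi>)^2)/2))"
proof -
  have "integrable lborel (\<lambda>\<xi>. std_normal_density (0 + s*\<xi>))"
    using s by (intro lborel_integrable_real_affine integrable_normal_density) auto
  then have "integrable lborel (\<lambda>\<xi>. sqrt (2*pi) * std_normal_density (0 + s*\<xi>))"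
    by (rule integrable_mult_right)
  then show ?thesis by (simp add: std_normal_density_def)
qed

lemma gauss_char:
  fixes s u :: real assumes s: "s > 0"
  shows "(CLINT \<xi>|lborel. complex_of_real (exp (-((s*\<xi>)^2)/2)) * cis (u*\<xi>))
     = complex_of_real (sqrt (2*pi) / s * exp (-((u/s)^2)/2))"
proof -
  define t where "t = u / s"
  have c: "(CLINT x|lborel. std_normal_density x *\<^sub>R iexp (t * x)) = complex_of_real (exp (-(t^2)/2))"
    using fun_cong[OF char_std_normal_distribution, of t] unfolding char_def
    by (subst (asm) integral_density) auto
  have "(CLINT x|lborel. std_normal_density x *\<^sub>R iexp (t * x))
      = \<bar>s\<bar> *\<^sub>R (CLINT \<xi>|lborel. std_normal_density (0 + s*\<xi>) *\<^sub>R iexp (t * (0 + s*\<xi>)))"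
    using s by (intro lborel_integral_real_affine) auto
  also have "(\<lambda>\<xi>. std_normal_density (0 + s*\<xi>) *\<^sub>R iexp (t * (0 + s*\<xi>)))
     = (\<lambda>\<xi>. complex_of_real (1 / sqrt (2*pi)) * (complex_of_real (exp (-((s*\<xi>)^2)/2)) * cis (u*\<xi>)))"
    using s by (auto simp: std_normal_density_def t_def cis_conv_exp scaleR_conv_of_real power_mult_distrib mult_ac)
  also have "(CLINT \<xi>|lborel. complex_of_real (1 / sqrt (2*pi)) * (complex_of_real (exp (-((s*\<xi>)^2)/2)) * cis (u*\<xi>)))
     = complex_of_real (1 / sqrt (2*pi)) * (CLINT \<xi>|lborel. complex_of_real (exp (-((s*\<xi>)^2)/2)) * cis (u*\<xi>))"
    by (rule integral_mult_right_zero)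
  finally have "complex_of_real (exp (-(t^2)/2)) = complex_of_real (s / sqrt (2*pi)) * (CLINT \<xi>|lborel. complex_of_real (exp (-((s*\<xi>)^2)/2)) * cis (u*\<xi>))"
    using c s by (simp add: scaleR_conv_of_real)
  then show ?thesis using s
    by (simp add: t_def field_simps power_divide)
qed

lemma integrable_prod_mult:
  fixes f g :: "real \<Rightarrow> real"
  assumes f: "integrable lborel f" and g: "integrable lborel g"
  shows "integrable (lborel \<Otimes>\<^sub>M lborel) (\<lambda>z. f (fst z) * g (snd z))"
proof (rule integrableI_bounded)
  have [measurable]: "f \<in> borel_measurable borel" "g \<in> borel_measurable borel"
    using f g by (auto dest: borel_measurable_integrable)
  show "(\<lambda>z. f (fst z) * g (snd z)) \<in> borel_measurable (lborel \<Otimes>\<^sub>M lborel)" by measurable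
  have "(\<integral>\<^sup>+ z. ennreal (norm (f (fst z) * g (snd z))) \<partial>(lborel \<Otimes>\<^sub>M lborel))
      = (\<integral>\<^sup>+ x. \<integral>\<^sup>+ y. ennreal (norm (f x)) * ennreal (norm (g y)) \<partial>lborel \<partial>lborel)"
    by (subst lborel.nn_integral_fst[symmetric]) (auto simp: abs_mult ennreal_mult)
  also have "\<dots> = (\<integral>\<^sup>+ x. ennreal (norm (f x)) * (\<integral>\<^sup>+ y. ennreal (norm (g y)) \<partial>lborel) \<partial>lborel)"
    by (subst nn_integral_cmult) auto
  also have "\<dots> = (\<integral>\<^sup>+ x. ennreal (norm (f x)) \<partial>lborel) * (\<integral>\<^sup>+ y. ennreal (norm (g y)) \<partial>lborel)"
    by (subst nn_integral_multc) auto
  also have "\<dots> < \<infinity>"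
    using f g unfolding integrable_iff_bounded by (auto simp: ennreal_mult_less_top)
  finally show "(\<integral>\<^sup>+ z. ennreal (norm (f (fst z) * g (snd z))) \<partial>(lborel \<Otimes>\<^sub>M lborel)) < \<infinity>" .
qed

lemma borel_measurable_cis[measurable]: "cis \<in> borel_measurable borel"
  by (rule borel_measurable_continuous_onI) (intro continuous_intros)

lemma borel_measurable_cnj'[measurable]: "cnj \<in> borel_measurable borel"
  by (rule borel_measurable_continuous_onI) (intro continuous_intros)

definition ftr :: "(real \<Rightarrow> real) \<Rightarrow> real \<Rightarrow> complex" where
  "ftr g \<xi> = (CLINT x|lborel. complex_of_real (g x) * cis (- x * \<xi>))"

lemma ftr_measurable[measurable]:
  assumes [measurable]: "g \<in> borel_measurable borel"
  shows "ftr g \<in> borel_measurable borel"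
  unfolding ftr_def[abs_def] by measurable

lemma ftr_bound:
  assumes "integrable lborel g"
  shows "cmod (ftr g \<xi>) \<le> (LINT x|lborel. \<bar>g x\<bar>)"
proof -
  have "cmod (ftr g \<xi>) \<le> (LINT x|lborel. norm (complex_of_real (g x) * cis (- x * \<xi>)))"
    unfolding ftr_def by (rule integral_norm_bound)
  also have "\<dots> = (LINT x|lborel. \<bar>g x\<bar>)" by (simp add: norm_mult)
  finally show ?thesis .
qed

lemma normal_density_nn_integral:
  assumes "\<sigma> > 0"
  shows "(\<integral>\<^sup>+ x. ennreal (normal_density \<mu> \<sigma> x) \<partial>lborel) = 1"
  using assms by (subst nn_integral_eq_integral) auto

lemma norm_integral_le_nn:
  fixes f :: "'a \<Rightarrow> 'b::{banach, second_countable_topology}"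
  shows "ennreal (norm (integral\<^sup>L M f)) \<le> (\<integral>\<^sup>+x. ennreal (norm (f x)) \<partial>M)"
proof (cases "integrable M f")
  case True then show ?thesis by (rule integral_norm_bound_ennreal)
next
  case False then show ?thesis by (simp add: not_integrable_integral_eq)
qed

lemma plancherel_gauss:
  fixes g :: "real \<Rightarrow> real" and c :: real
  assumes gm[measurable]: "g \<in> borel_measurable borel" and gi: "integrable lborel g" and c: "c > 0"
  shows "(\<integral>\<^sup>+ \<xi>. ennreal (exp (-((c*\<xi>)^2)/2) * (cmod (ftr g \<xi>))^2) \<partial>lborel)
     \<le> ennreal (2*pi) * (\<integral>\<^sup>+ x. ennreal ((g x)^2) \<partial>lborel)"
proof -
  define w where "w \<xi> = exp (-((c*\<xi>)^2)/2)" for \<xi>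
  define K where "K u = 2 * pi * normal_density 0 c u" for u
  define L where "L = (LINT x|lborel. \<bar>g x\<bar>)"
  define G where "G = ftr g"
  have wm[measurable]: "w \<in> borel_measurable borel" unfolding w_def[abs_def] by measurable
  have Gm[measurable]: "G \<in> borel_measurable borel" unfolding G_def by measurable
  have Km[measurable]: "K \<in> borel_measurable borel" unfolding K_def[abs_def] by measurable
  have wi: "integrable lborel w" unfolding w_def using gauss_integrable[OF c] .
  have wpos: "0 < w \<xi>" for \<xi> unfolding w_def by simp
  have Kpos: "0 \<le> K u" for u unfolding K_def by simp
  have GL: "cmod (G \<xi>) \<le> L" for \<xi> unfolding G_def L_def using ftr_bound[OF gi] .
  have L0: "0 \<le> L" unfolding L_def by simp
  have gai: "integrable lborel (\<lambda>x. \<bar>g x\<bar>)" using gi by simp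
  have cnjG: "cnj (G \<xi>) = (CLINT x'|lborel. complex_of_real (g x') * cis (x' * \<xi>))" for \<xi>
    unfolding G_def ftr_def by (subst Bochner_Integration.integral_cnj[symmetric]) (simp add: cis_cnj)
  have Kchar: "(CLINT \<xi>|lborel. complex_of_real (w \<xi>) * cis (u*\<xi>)) = complex_of_real (K u)" for u
  proof -
    have e1: "sqrt (2*pi*c^2) = sqrt(2*pi) * c" using c by (simp add: real_sqrt_mult)
    have e2: "sqrt (2*pi) * sqrt (2*pi) = 2*pi" by simp
    have "K u = sqrt (2*pi) / c * exp (-((u/c)^2)/2)"
      unfolding K_def normal_density_def e1 using c
      by (simp add: power_divide field_simps flip: e2)
    then show ?thesis unfolding w_def using gauss_char[OF c, of u] by simp
  qed
  have inner: "(CLINT \<xi>|lborel. complex_of_real (w \<xi>) * cis (- x*\<xi>) * cnj (G \<xi>))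
      = (CLINT x'|lborel. complex_of_real (g x' * K (x' - x)))" for x
  proof -
    have "(CLINT \<xi>|lborel. complex_of_real (w \<xi>) * cis (- x*\<xi>) * cnj (G \<xi>))
        = (CLINT \<xi>|lborel. CLINT x'|lborel. complex_of_real (w \<xi>) * cis (- x*\<xi>) * (complex_of_real (g x') * cis (x' * \<xi>)))"
      unfolding cnjG by simp
    also have "\<dots> = (CLINT x'|lborel. CLINT \<xi>|lborel. complex_of_real (w \<xi>) * cis (- x*\<xi>) * (complex_of_real (g x') * cis (x' * \<xi>)))"
    proof (rule lborel_pair.Fubini_integral[symmetric])
      show "integrable (lborel \<Otimes>\<^sub>M lborel)
        (\<lambda>(\<xi>, x'). complex_of_real (w \<xi>) * cis (- x*\<xi>) * (complex_of_real (g x') * cis (x' * \<xi>)))"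
      proof (rule Bochner_Integration.integrable_bound)
        show "integrable (lborel \<Otimes>\<^sub>M lborel) (\<lambda>z. w (fst z) * \<bar>g (snd z)\<bar>)"
          by (rule integrable_prod_mult[OF wi gai])
        show "(\<lambda>(\<xi>, x'). complex_of_real (w \<xi>) * cis (- x*\<xi>) * (complex_of_real (g x') * cis (x' * \<xi>)))
            \<in> borel_measurable (lborel \<Otimes>\<^sub>M lborel)" by measurable
        show "AE z in lborel \<Otimes>\<^sub>M lborel. norm ((\<lambda>(\<xi>, x'). complex_of_real (w \<xi>) * cis (- x*\<xi>) * (complex_of_real (g x') * cis (x' * \<xi>))) z)
            \<le> norm (w (fst z) * \<bar>g (snd z)\<bar>)"
          using wpos by (intro AE_I2) (simp add: case_prod_beta norm_mult less_imp_le)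
      qed
    qed
    also have "\<dots> = (CLINT x'|lborel. complex_of_real (g x') * (CLINT \<xi>|lborel. complex_of_real (w \<xi>) * cis ((x' - x)*\<xi>)))"
    proof (intro Bochner_Integration.integral_cong refl)
      fix x' :: real
      have h: "cis (- x * \<xi>) * cis (x' * \<xi>) = cis ((x' - x) * \<xi>)" for \<xi>
        by (simp add: cis_mult left_diff_distrib)
      have "complex_of_real (w \<xi>) * cis (- x*\<xi>) * (complex_of_real (g x') * cis (x' * \<xi>))
          = complex_of_real (g x') * (complex_of_real (w \<xi>) * (cis (- x * \<xi>) * cis (x' * \<xi>)))" for \<xi>
        by (simp only: ac_simps)
      then show "(CLINT \<xi>|lborel. complex_of_real (w \<xi>) * cis (- x*\<xi>) * (complex_of_real (g x') * cis (x' * \<xi>)))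
          = complex_of_real (g x') * (CLINT \<xi>|lborel. complex_of_real (w \<xi>) * cis ((x' - x)*\<xi>))"
        by (simp only: h integral_mult_right_zero)
    qed
    also have "\<dots> = (CLINT x'|lborel. complex_of_real (g x' * K (x' - x)))"
      unfolding Kchar by simp
    finally show ?thesis .
  qed
  have wGi: "integrable lborel (\<lambda>\<xi>. w \<xi> * (cmod (G \<xi>))^2)"
  proof (rule Bochner_Integration.integrable_bound)
    show "integrable lborel (\<lambda>\<xi>. w \<xi> * L^2)" using wi by simp
    show "(\<lambda>\<xi>. w \<xi> * (cmod (G \<xi>))^2) \<in> borel_measurable lborel" by measurable
    show "AE \<xi> in lborel. norm (w \<xi> * (cmod (G \<xi>))^2) \<le> norm (w \<xi> * L^2)"
    proof (intro AE_I2)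
      fix \<xi>
      have "(cmod (G \<xi>))^2 \<le> L^2" using GL[of \<xi>] by (intro power_mono) auto
      then show "norm (w \<xi> * (cmod (G \<xi>))^2) \<le> norm (w \<xi> * L^2)"
        using wpos[of \<xi>] by (simp add: abs_mult)
    qed
  qed
  have main_eq: "complex_of_real (LINT \<xi>|lborel. w \<xi> * (cmod (G \<xi>))^2)
      = (CLINT x|lborel. complex_of_real (g x) * (CLINT x'|lborel. complex_of_real (g x' * K (x' - x))))"
  proof -
    have "complex_of_real (LINT \<xi>|lborel. w \<xi> * (cmod (G \<xi>))^2)
        = (CLINT \<xi>|lborel. complex_of_real (w \<xi>) * cnj (G \<xi>) * G \<xi>)"
      by (simp add: integral_complex_of_real[symmetric] complex_norm_square mult_ac del: of_real_power)
    also have "\<dots> = (CLINT \<xi>|lborel. CLINT x|lborel. complex_of_real (w \<xi>) * cnj (G \<xi>) * (complex_of_real (g x) * cis (- x * \<xi>)))"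
      by (simp add: G_def ftr_def)
    also have "\<dots> = (CLINT x|lborel. CLINT \<xi>|lborel. complex_of_real (w \<xi>) * cnj (G \<xi>) * (complex_of_real (g x) * cis (- x * \<xi>)))"
    proof (rule lborel_pair.Fubini_integral)
      show "integrable (lborel \<Otimes>\<^sub>M lborel)
        (\<lambda>(x, \<xi>). complex_of_real (w \<xi>) * cnj (G \<xi>) * (complex_of_real (g x) * cis (- x * \<xi>)))"
      proof (rule Bochner_Integration.integrable_bound)
        show "integrable (lborel \<Otimes>\<^sub>M lborel) (\<lambda>z. \<bar>g (fst z)\<bar> * (w (snd z) * L))"
          by (rule integrable_prod_mult[OF gai]) (use wi in simp)
        show "(\<lambda>(x, \<xi>). complex_of_real (w \<xi>) * cnj (G \<xi>) * (complex_of_real (g x) * cis (- x * \<xi>)))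
            \<in> borel_measurable (lborel \<Otimes>\<^sub>M lborel)" by measurable
        show "AE z in lborel \<Otimes>\<^sub>M lborel. norm ((\<lambda>(x, \<xi>). complex_of_real (w \<xi>) * cnj (G \<xi>) * (complex_of_real (g x) * cis (- x * \<xi>))) z)
            \<le> norm (\<bar>g (fst z)\<bar> * (w (snd z) * L))"
        proof (intro AE_I2)
          fix z :: "real \<times> real"
          obtain x \<xi> where z: "z = (x, \<xi>)" by (cases z)
          have "w \<xi> * cmod (G \<xi>) * \<bar>g x\<bar> \<le> w \<xi> * L * \<bar>g x\<bar>"
            using GL[of \<xi>] wpos[of \<xi>] by (intro mult_right_mono mult_left_mono) auto
          then show "norm ((\<lambda>(x, \<xi>). complex_of_real (w \<xi>) * cnj (G \<xi>) * (complex_of_real (g x) * cis (- x * \<xi>))) z)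
            \<le> norm (\<bar>g (fst z)\<bar> * (w (snd z) * L))"
            using wpos[of \<xi>] L0 by (simp add: z norm_mult abs_mult mult_ac)
        qed
      qed
    qed
    also have "\<dots> = (CLINT x|lborel. complex_of_real (g x) * (CLINT \<xi>|lborel. complex_of_real (w \<xi>) * cis (- x*\<xi>) * cnj (G \<xi>)))"
    proof (intro Bochner_Integration.integral_cong refl)
      fix x :: real
      have "complex_of_real (w \<xi>) * cnj (G \<xi>) * (complex_of_real (g x) * cis (- x * \<xi>))
          = complex_of_real (g x) * (complex_of_real (w \<xi>) * cis (- x*\<xi>) * cnj (G \<xi>))" for \<xi>
        by (simp only: ac_simps)
      then show "(CLINT \<xi>|lborel. complex_of_real (w \<xi>) * cnj (G \<xi>) * (complex_of_real (g x) * cis (- x * \<xi>)))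
          = complex_of_real (g x) * (CLINT \<xi>|lborel. complex_of_real (w \<xi>) * cis (- x*\<xi>) * cnj (G \<xi>))"
        by (simp only: integral_mult_right_zero)
    qed
    also have "\<dots> = (CLINT x|lborel. complex_of_real (g x) * (CLINT x'|lborel. complex_of_real (g x' * K (x' - x))))"
      by (simp only: inner)
    finally show ?thesis .
  qed
  have Kint1: "(\<integral>\<^sup>+ x'. ennreal (K (x' - x)) \<partial>lborel) = ennreal (2*pi)" for x
  proof -
    have "(\<integral>\<^sup>+ x'. ennreal (K (x' - x)) \<partial>lborel) = (\<integral>\<^sup>+ x'. ennreal (2*pi) * ennreal (normal_density x c x') \<partial>lborel)"
    proof (intro nn_integral_cong)
      fix x' :: real
      have "K (x' - x) = 2*pi*normal_density x c x'" by (simp add: K_def normal_density_def)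
      moreover have "(0::real) \<le> 2*pi" by simp
      ultimately show "ennreal (K (x' - x)) = ennreal (2*pi) * ennreal (normal_density x c x')"
        by (metis ennreal_mult normal_density_nonneg)
    qed
    also have "\<dots> = ennreal (2*pi)"
      using c by (simp add: nn_integral_cmult normal_density_nn_integral)
    finally show ?thesis .
  qed
  have Kint2: "(\<integral>\<^sup>+ x. ennreal (K (x' - x)) \<partial>lborel) = ennreal (2*pi)" for x'
  proof -
    have "(\<integral>\<^sup>+ x. ennreal (K (x' - x)) \<partial>lborel) = (\<integral>\<^sup>+ x. ennreal (2*pi) * ennreal (normal_density x' c x) \<partial>lborel)"
    proof (intro nn_integral_cong)
      fix x :: real
      have "K (x' - x) = 2*pi*normal_density x' c x" by (simp add: K_def normal_density_def power2_commute)
      moreover have "(0::real) \<le> 2*pi" by simp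
      ultimately show "ennreal (K (x' - x)) = ennreal (2*pi) * ennreal (normal_density x' c x)"
        by (metis ennreal_mult normal_density_nonneg)
    qed
    also have "\<dots> = ennreal (2*pi)"
      using c by (simp add: nn_integral_cmult normal_density_nn_integral)
    finally show ?thesis .
  qed
  define I where "I = (\<integral>\<^sup>+ x. ennreal ((g x)^2) \<partial>lborel)"
  have "(\<integral>\<^sup>+ \<xi>. ennreal (w \<xi> * (cmod (G \<xi>))^2) \<partial>lborel) = ennreal (LINT \<xi>|lborel. w \<xi> * (cmod (G \<xi>))^2)"
    using wGi wpos by (intro nn_integral_eq_integral) (auto intro!: AE_I2 mult_nonneg_nonneg simp: less_imp_le[OF wpos])
  also have "\<dots> = ennreal (cmod (complex_of_real (LINT \<xi>|lborel. w \<xi> * (cmod (G \<xi>))^2)))"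
    using wpos by (simp add: less_imp_le)
  also have "\<dots> = ennreal (cmod (CLINT x|lborel. complex_of_real (g x) * (CLINT x'|lborel. complex_of_real (g x' * K (x' - x)))))"
    by (simp only: main_eq)
  also have "\<dots> \<le> (\<integral>\<^sup>+ x. ennreal (cmod (complex_of_real (g x) * (CLINT x'|lborel. complex_of_real (g x' * K (x' - x))))) \<partial>lborel)"
    by (rule norm_integral_le_nn)
  also have "\<dots> \<le> (\<integral>\<^sup>+ x. ennreal \<bar>g x\<bar> * (\<integral>\<^sup>+ x'. ennreal (\<bar>g x'\<bar> * K (x' - x)) \<partial>lborel) \<partial>lborel)"
  proof (intro nn_integral_mono)
    fix x
    have "ennreal (cmod (CLINT x'|lborel. complex_of_real (g x' * K (x' - x))))
        \<le> (\<integral>\<^sup>+ x'. ennreal (cmod (complex_of_real (g x' * K (x' - x)))) \<partial>lborel)"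
      by (rule norm_integral_le_nn)
    also have "\<dots> = (\<integral>\<^sup>+ x'. ennreal (\<bar>g x'\<bar> * K (x' - x)) \<partial>lborel)"
      using Kpos by (intro nn_integral_cong) (simp add: norm_mult)
    finally have *: "ennreal (cmod (CLINT x'|lborel. complex_of_real (g x' * K (x' - x))))
        \<le> (\<integral>\<^sup>+ x'. ennreal (\<bar>g x'\<bar> * K (x' - x)) \<partial>lborel)" .
    show "ennreal (cmod (complex_of_real (g x) * (CLINT x'|lborel. complex_of_real (g x' * K (x' - x)))))
        \<le> ennreal \<bar>g x\<bar> * (\<integral>\<^sup>+ x'. ennreal (\<bar>g x'\<bar> * K (x' - x)) \<partial>lborel)"
    proof -
      have "ennreal (cmod (complex_of_real (g x) * (CLINT x'|lborel. complex_of_real (g x' * K (x' - x)))))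
          = ennreal \<bar>g x\<bar> * ennreal (cmod (CLINT x'|lborel. complex_of_real (g x' * K (x' - x))))"
        by (simp only: norm_mult norm_of_real ennreal_mult[OF abs_ge_zero norm_ge_zero])
      also have "\<dots> \<le> ennreal \<bar>g x\<bar> * (\<integral>\<^sup>+ x'. ennreal (\<bar>g x'\<bar> * K (x' - x)) \<partial>lborel)"
        by (rule mult_left_mono[OF *]) simp
      finally show ?thesis .
    qed
  qed
  also have "\<dots> = (\<integral>\<^sup>+ x. \<integral>\<^sup>+ x'. ennreal (\<bar>g x\<bar> * \<bar>g x'\<bar> * K (x' - x)) \<partial>lborel \<partial>lborel)"
  proof (intro nn_integral_cong)
    fix x :: real
    have "ennreal \<bar>g x\<bar> * (\<integral>\<^sup>+ x'. ennreal (\<bar>g x'\<bar> * K (x' - x)) \<partial>lborel)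
        = (\<integral>\<^sup>+ x'. ennreal \<bar>g x\<bar> * ennreal (\<bar>g x'\<bar> * K (x' - x)) \<partial>lborel)"
      by (rule nn_integral_cmult[symmetric]) measurable
    also have "\<dots> = (\<integral>\<^sup>+ x'. ennreal (\<bar>g x\<bar> * \<bar>g x'\<bar> * K (x' - x)) \<partial>lborel)"
      using Kpos by (intro nn_integral_cong) (simp add: ennreal_mult mult.assoc)
    finally show "ennreal \<bar>g x\<bar> * (\<integral>\<^sup>+ x'. ennreal (\<bar>g x'\<bar> * K (x' - x)) \<partial>lborel)
        = (\<integral>\<^sup>+ x'. ennreal (\<bar>g x\<bar> * \<bar>g x'\<bar> * K (x' - x)) \<partial>lborel)" .
  qed
  also have "\<dots> \<le> (\<integral>\<^sup>+ x. \<integral>\<^sup>+ x'. ennreal (1/2) * (ennreal ((g x)^2 * K (x' - x)) + ennreal ((g x')^2 * K (x' - x))) \<partial>lborel \<partial>lborel)"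
  proof (intro nn_integral_mono)
    fix x x'
    have "\<bar>g x\<bar> * \<bar>g x'\<bar> \<le> 1/2 * ((g x)^2 + (g x')^2)"
      using sum_squares_bound[of "\<bar>g x\<bar>" "\<bar>g x'\<bar>"] by (simp add: power2_eq_square)
    then have "\<bar>g x\<bar> * \<bar>g x'\<bar> * K (x' - x) \<le> 1/2 * ((g x)^2 * K (x' - x) + (g x')^2 * K (x' - x))"
      using Kpos[of "x' - x"] by (metis distrib_right mult.assoc mult_right_mono)
    then show "ennreal (\<bar>g x\<bar> * \<bar>g x'\<bar> * K (x' - x)) \<le> ennreal (1/2) * (ennreal ((g x)^2 * K (x' - x)) + ennreal ((g x')^2 * K (x' - x)))"
    proof -
      have A0: "0 \<le> (g x)^2 * K (x' - x)" and B0: "0 \<le> (g x')^2 * K (x' - x)" using Kpos[of "x' - x"] by auto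
      have h0: "(0::real) \<le> 1/2" by simp
      have "ennreal (1/2) * (ennreal ((g x)^2 * K (x' - x)) + ennreal ((g x')^2 * K (x' - x)))
          = ennreal (1/2 * ((g x)^2 * K (x' - x) + (g x')^2 * K (x' - x)))"
        by (simp only: ennreal_plus[OF A0 B0, symmetric] ennreal_mult[OF h0 add_nonneg_nonneg[OF A0 B0], symmetric])
      moreover have "ennreal (\<bar>g x\<bar> * \<bar>g x'\<bar> * K (x' - x)) \<le> ennreal (1/2 * ((g x)^2 * K (x' - x) + (g x')^2 * K (x' - x)))"
        by (rule ennreal_leI) fact
      ultimately show ?thesis by simp
    qed
  qed
  also have "\<dots> = ennreal (1/2) * ((\<integral>\<^sup>+ x. \<integral>\<^sup>+ x'. ennreal ((g x)^2 * K (x' - x)) \<partial>lborel \<partial>lborel)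
      + (\<integral>\<^sup>+ x. \<integral>\<^sup>+ x'. ennreal ((g x')^2 * K (x' - x)) \<partial>lborel \<partial>lborel))"
    by (simp add: nn_integral_cmult nn_integral_add)
  also have "(\<integral>\<^sup>+ x. \<integral>\<^sup>+ x'. ennreal ((g x)^2 * K (x' - x)) \<partial>lborel \<partial>lborel) = ennreal (2*pi) * I"
  proof -
    have "(\<integral>\<^sup>+ x. \<integral>\<^sup>+ x'. ennreal ((g x)^2 * K (x' - x)) \<partial>lborel \<partial>lborel)
        = (\<integral>\<^sup>+ x. ennreal ((g x)^2) * (\<integral>\<^sup>+ x'. ennreal (K (x' - x)) \<partial>lborel) \<partial>lborel)"
      using Kpos by (simp add: nn_integral_cmult ennreal_mult)
    also have "\<dots> = (\<integral>\<^sup>+ x. ennreal (2*pi) * ennreal ((g x)^2) \<partial>lborel)"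
      by (simp add: Kint1 mult.commute)
    also have "\<dots> = ennreal (2*pi) * I"
      unfolding I_def by (rule nn_integral_cmult) measurable
    finally show ?thesis .
  qed
  also have "(\<integral>\<^sup>+ x. \<integral>\<^sup>+ x'. ennreal ((g x')^2 * K (x' - x)) \<partial>lborel \<partial>lborel) = ennreal (2*pi) * I"
  proof -
    have "(\<integral>\<^sup>+ x. \<integral>\<^sup>+ x'. ennreal ((g x')^2 * K (x' - x)) \<partial>lborel \<partial>lborel)
        = (\<integral>\<^sup>+ x'. \<integral>\<^sup>+ x. ennreal ((g x')^2 * K (x' - x)) \<partial>lborel \<partial>lborel)"
    proof -
      have m: "(\<lambda>z. ennreal ((g (snd z))^2 * K (snd z - fst z))) \<in> borel_measurable (lborel \<Otimes>\<^sub>M lborel)"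
        by measurable
      show ?thesis using lborel_pair.Fubini[OF m] by simp
    qed
    also have "\<dots> = (\<integral>\<^sup>+ x'. ennreal ((g x')^2) * (\<integral>\<^sup>+ x. ennreal (K (x' - x)) \<partial>lborel) \<partial>lborel)"
      using Kpos by (simp add: nn_integral_cmult ennreal_mult)
    also have "\<dots> = (\<integral>\<^sup>+ x'. ennreal (2*pi) * ennreal ((g x')^2) \<partial>lborel)"
      by (simp add: Kint2 mult.commute)
    also have "\<dots> = ennreal (2*pi) * I"
      unfolding I_def by (rule nn_integral_cmult) measurable
    finally show ?thesis .
  qed
  also have "ennreal (1/2) * (ennreal (2*pi) * I + ennreal (2*pi) * I) = ennreal (2*pi) * I"
  proof -
    have "ennreal (1/2) * (ennreal (2*pi) * I + ennreal (2*pi) * I) = (ennreal (1/2) * 2) * (ennreal (2*pi) * I)"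
      by (simp add: mult_2[symmetric] mult_ac)
    also have "ennreal (1/2) * 2 = 1"
    proof -
      have "ennreal (1/2) * 2 = ennreal (1/2) * ennreal 2" by simp
      also have "\<dots> = ennreal (1/2 * 2)" by (rule ennreal_mult[symmetric]) auto
      finally show ?thesis by simp
    qed
    finally show ?thesis by simp
  qed
  finally show ?thesis unfolding w_def G_def I_def .
qed

lemma plancherel_le:
  fixes g :: "real \<Rightarrow> real"
  assumes gm[measurable]: "g \<in> borel_measurable borel" and gi: "integrable lborel g"
  shows "(\<integral>\<^sup>+ \<xi>. ennreal ((cmod (ftr g \<xi>))^2) \<partial>lborel) \<le> ennreal (2*pi) * (\<integral>\<^sup>+ x. ennreal ((g x)^2) \<partial>lborel)"
proof -
  define u where "u n \<xi> = ennreal (exp (-((inverse (real (Suc n)) * \<xi>)^2)/2) * (cmod (ftr g \<xi>))^2)" for n \<xi>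
  have um: "u n \<in> borel_measurable lborel" for n unfolding u_def[abs_def] by measurable
  have lim: "liminf (\<lambda>n. u n \<xi>) = ennreal ((cmod (ftr g \<xi>))^2)" for \<xi>
  proof (rule lim_imp_Liminf)
    show "sequentially \<noteq> bot" by simp
    have "(\<lambda>n. inverse (real (Suc n))) \<longlonglongrightarrow> 0" by (rule LIMSEQ_inverse_real_of_nat)
    then have "(\<lambda>n. exp (-((inverse (real (Suc n)) * \<xi>)^2)/2) * (cmod (ftr g \<xi>))^2) \<longlonglongrightarrow> exp (-((0 * \<xi>)^2)/2) * (cmod (ftr g \<xi>))^2"
      by (intro tendsto_intros) auto
    then have "(\<lambda>n. ennreal (exp (-((inverse (real (Suc n)) * \<xi>)^2)/2) * (cmod (ftr g \<xi>))^2)) \<longlonglongrightarrow> ennreal ((cmod (ftr g \<xi>))^2)"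
      by (intro tendsto_ennrealI) simp
    then show "(\<lambda>n. u n \<xi>) \<longlonglongrightarrow> ennreal ((cmod (ftr g \<xi>))^2)" unfolding u_def .
  qed
  have "(\<integral>\<^sup>+ \<xi>. ennreal ((cmod (ftr g \<xi>))^2) \<partial>lborel) = (\<integral>\<^sup>+ \<xi>. liminf (\<lambda>n. u n \<xi>) \<partial>lborel)"
    by (simp add: lim)
  also have "\<dots> \<le> liminf (\<lambda>n. integral\<^sup>N lborel (u n))"
    by (rule nn_integral_liminf) (rule um)
  also have "\<dots> \<le> limsup (\<lambda>n. integral\<^sup>N lborel (u n))"
    by (rule Liminf_le_Limsup) simp
  also have "\<dots> \<le> ennreal (2*pi) * (\<integral>\<^sup>+ x. ennreal ((g x)^2) \<partial>lborel)"
  proof (rule Limsup_bounded, rule always_eventually, rule allI)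
    fix n
    show "integral\<^sup>N lborel (u n) \<le> ennreal (2*pi) * (\<integral>\<^sup>+ x. ennreal ((g x)^2) \<partial>lborel)"
      unfolding u_def by (rule plancherel_gauss[OF gm gi]) simp
  qed
  finally show ?thesis .
qed

lemma strip_indicator: "indicator (strip M) z = (indicator {0..M} (snd z) :: 'a::zero_neq_one)"
  by (cases z) (auto simp: strip_def indicator_def)

lemma strip_nn_fst:
  assumes [measurable]: "h \<in> borel_measurable (lborel \<Otimes>\<^sub>M lborel)"
  shows "(\<integral>\<^sup>+ z\<in>strip M. h z \<partial>lborel) = (\<integral>\<^sup>+ a. \<integral>\<^sup>+ y. h (a, y) * indicator {0..M} y \<partial>lborel \<partial>lborel)"
proof -
  have "(\<integral>\<^sup>+ z\<in>strip M. h z \<partial>lborel) = (\<integral>\<^sup>+ z. h z * indicator {0..M} (snd z) \<partial>(lborel \<Otimes>\<^sub>M lborel))"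
    by (simp add: lborel_prod strip_indicator)
  also have "\<dots> = (\<integral>\<^sup>+ a. \<integral>\<^sup>+ y. h (a, y) * indicator {0..M} y \<partial>lborel \<partial>lborel)"
    by (subst lborel.nn_integral_fst[symmetric]) auto
  finally show ?thesis .
qed

lemma strip_nn_snd:
  assumes [measurable]: "h \<in> borel_measurable (lborel \<Otimes>\<^sub>M lborel)"
  shows "(\<integral>\<^sup>+ z\<in>strip M. h z \<partial>lborel) = (\<integral>\<^sup>+ y. \<integral>\<^sup>+ a. h (a, y) * indicator {0..M} y \<partial>lborel \<partial>lborel)"
proof -
  have "(\<integral>\<^sup>+ z\<in>strip M. h z \<partial>lborel) = (\<integral>\<^sup>+ z. h z * indicator {0..M} (snd z) \<partial>(lborel \<Otimes>\<^sub>M lborel))"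
    by (simp add: lborel_prod strip_indicator)
  also have "\<dots> = (\<integral>\<^sup>+ y. \<integral>\<^sup>+ a. h (a, y) * indicator {0..M} y \<partial>lborel \<partial>lborel)"
    by (subst lborel_pair.nn_integral_snd[symmetric]) auto
  finally show ?thesis .
qed

lemma pairP: "h \<in> borel_measurable borel \<Longrightarrow> h \<in> borel_measurable (lborel \<Otimes>\<^sub>M lborel)"
  by (simp add: lborel_prod)

lemma trunc_pft_measurable[measurable]:
  assumes fm: "(\<lambda>z. f (fst z) (snd z)) \<in> borel_measurable borel"
  shows "trunc_pft f R \<in> borel_measurable (lborel \<Otimes>\<^sub>M lborel)"
proof -
  have fmP: "(\<lambda>z. f (fst z) (snd z)) \<in> borel_measurable (lborel \<Otimes>\<^sub>M lborel)"
    using fm by (rule pairP)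
  have "(\<lambda>w::(real\<times>real)\<times>real. (snd w, snd (fst w))) \<in> measurable ((lborel \<Otimes>\<^sub>M lborel) \<Otimes>\<^sub>M lborel) (lborel \<Otimes>\<^sub>M lborel)"
    by measurable
  from measurable_compose[OF this fmP]
  have [measurable]: "(\<lambda>w::(real\<times>real)\<times>real. f (snd w) (snd (fst w))) \<in> borel_measurable ((lborel \<Otimes>\<^sub>M lborel) \<Otimes>\<^sub>M lborel)"
    by simp
  have "(\<lambda>(z, x). indicator {-R..R} x *\<^sub>R (complex_of_real (f x (snd z)) * cis (- x * fst z)))
     \<in> borel_measurable ((lborel \<Otimes>\<^sub>M lborel) \<Otimes>\<^sub>M lborel)"
    by (simp add: case_prod_beta) measurable
  then have "(\<lambda>z. LINT x|lborel. indicator {-R..R} x *\<^sub>R (complex_of_real (f x (snd z)) * cis (- x * fst z)))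
     \<in> borel_measurable (lborel \<Otimes>\<^sub>M lborel)"
    by (rule lborel.borel_measurable_lebesgue_integral)
  then show ?thesis unfolding trunc_pft_def[abs_def] set_lebesgue_integral_def by simp
qed

lemma slice_meas:
  fixes f :: "real \<Rightarrow> real \<Rightarrow> real"
  assumes fm: "(\<lambda>z. f (fst z) (snd z)) \<in> borel_measurable borel"
  shows "(\<lambda>x. f x y) \<in> borel_measurable borel"
proof -
  have "(\<lambda>x::real. (x, y)) \<in> borel_measurable borel"
    by (rule borel_measurable_continuous_onI) (intro continuous_intros)
  from measurable_compose[OF this fm] show ?thesis by simp
qed

lemma slice_meas2:
  fixes f :: "real \<Rightarrow> real \<Rightarrow> real"
  assumes fm: "(\<lambda>z. f (fst z) (snd z)) \<in> borel_measurable borel"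
  shows "(\<lambda>y. f x y) \<in> borel_measurable borel"
proof -
  have "(\<lambda>y::real. (x, y)) \<in> borel_measurable borel"
    by (rule borel_measurable_continuous_onI) (intro continuous_intros)
  from measurable_compose[OF this fm] show ?thesis by simp
qed

lemma L2_interval_integrable:
  fixes \<phi> :: "real \<Rightarrow> real"
  assumes [measurable]: "\<phi> \<in> borel_measurable borel" and fin: "(\<integral>\<^sup>+ x. ennreal ((\<phi> x)^2) \<partial>lborel) < \<infinity>"
  shows "integrable lborel (\<lambda>x. indicator {a..b} x * \<phi> x)"
proof (rule integrableI_bounded)
  show "(\<lambda>x. indicator {a..b} x * \<phi> x) \<in> borel_measurable lborel" by measurable
  have "(\<integral>\<^sup>+ x. ennreal (norm (indicator {a..b} x * \<phi> x)) \<partial>lborel)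
      = (\<integral>\<^sup>+ x. ennreal (indicator {a..b} x) * ennreal \<bar>\<phi> x\<bar> \<partial>lborel)"
    by (intro nn_integral_cong) (simp add: abs_mult ennreal_mult)
  also have "\<dots> < \<infinity>"
  proof -
    have "(\<integral>\<^sup>+ x. ennreal (indicator {a..b} x) * ennreal \<bar>\<phi> x\<bar> \<partial>lborel)^2
        \<le> (\<integral>\<^sup>+ x. (ennreal (indicator {a..b} x))^2 \<partial>lborel) * (\<integral>\<^sup>+ x. (ennreal \<bar>\<phi> x\<bar>)^2 \<partial>lborel)"
      by (rule Cauchy_Schwarz_nn_integral) measurable
    also have "(\<integral>\<^sup>+ x. (ennreal (indicator {a..b} x))^2 \<partial>lborel) = (\<integral>\<^sup>+ x. indicator {a..b} x \<partial>lborel)"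
      by (intro nn_integral_cong) (simp add: indicator_def)
    also have "\<dots> = emeasure lborel {a..b}" by simp
    also have "(\<integral>\<^sup>+ x. (ennreal \<bar>\<phi> x\<bar>)^2 \<partial>lborel) = (\<integral>\<^sup>+ x. ennreal ((\<phi> x)^2) \<partial>lborel)"
      by (intro nn_integral_cong) (metis abs_ge_zero ennreal_power power2_abs)
    also have "emeasure lborel {a..b} * (\<integral>\<^sup>+ x. ennreal ((\<phi> x)^2) \<partial>lborel) < \<infinity>"
    proof -
      have "emeasure lborel {a..b} < \<infinity>" by (cases "a \<le> b") auto
      then show ?thesis using fin by (simp add: ennreal_mult_less_top)
    qed
    finally show ?thesis by (simp add: power_less_top_ennreal)
  qed
  finally show "(\<integral>\<^sup>+ x. ennreal (norm (indicator {a..b} x * \<phi> x)) \<partial>lborel) < \<infinity>" .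
qed

lemma trunc_pft_slice:
  assumes fm: "(\<lambda>z. f (fst z) (snd z)) \<in> borel_measurable borel"
  shows "trunc_pft f R (\<xi>, y) = ftr (\<lambda>x. indicator {-R..R} x * f x y) \<xi>"
  unfolding trunc_pft_def ftr_def set_lebesgue_integral_def
  by (intro Bochner_Integration.integral_cong refl) (simp add: indicator_def)

lemma ftr_diff:
  assumes "integrable lborel g" "integrable lborel h"
  shows "ftr g \<xi> - ftr h \<xi> = ftr (\<lambda>x. g x - h x) \<xi>"
proof -
  have i: "integrable lborel (\<lambda>x. complex_of_real (k x) * cis (- x * \<xi>))" if "integrable lborel k" for k
  proof (rule Bochner_Integration.integrable_bound)
    show "integrable lborel (\<lambda>x. \<bar>k x\<bar>)" using that by simp
    show "(\<lambda>x. complex_of_real (k x) * cis (- x * \<xi>)) \<in> borel_measurable lborel"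
      using borel_measurable_integrable[OF that] by measurable
    show "AE x in lborel. norm (complex_of_real (k x) * cis (- x * \<xi>)) \<le> norm \<bar>k x\<bar>"
      by (simp add: norm_mult)
  qed
  show ?thesis unfolding ftr_def
    by (subst Bochner_Integration.integral_diff[symmetric, OF i[OF assms(1)] i[OF assms(2)]])
       (simp add: left_diff_distrib)
qed

definition ftail :: "real \<Rightarrow> (real \<Rightarrow> real \<Rightarrow> real) \<Rightarrow> real \<Rightarrow> ennreal" where
  "ftail M f r = (\<integral>\<^sup>+ z\<in>strip M. ennreal ((f (fst z) (snd z))^2 * of_bool (r < \<bar>fst z\<bar>)) \<partial>lborel)"

lemma slice_bound:
  assumes fm: "(\<lambda>z. f (fst z) (snd z)) \<in> borel_measurable borel"
    and Q: "(\<integral>\<^sup>+ x. ennreal ((f x y)^2) \<partial>lborel) < \<infinity>"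
  shows "(\<integral>\<^sup>+ \<xi>. ennreal ((cmod (trunc_pft f S (\<xi>, y) - trunc_pft f R (\<xi>, y)))^2) \<partial>lborel)
     \<le> ennreal (2*pi) * (\<integral>\<^sup>+ x. ennreal ((f x y)^2 * of_bool (min R S < \<bar>x\<bar>)) \<partial>lborel)"
proof -
  note [measurable] = slice_meas[OF fm]
  define g where "g x = (indicator {-S..S} x - indicator {-R..R} x) * f x y" for x
  have iS: "integrable lborel (\<lambda>x. indicator {-S..S} x * f x y)"
    by (rule L2_interval_integrable) (use Q in auto)
  have iR: "integrable lborel (\<lambda>x. indicator {-R..R} x * f x y)"
    by (rule L2_interval_integrable) (use Q in auto)
  have gi: "integrable lborel g" unfolding g_def left_diff_distrib using iS iR by simp
  have gm[measurable]: "g \<in> borel_measurable borel" unfolding g_def[abs_def] by measurable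
  have eq: "trunc_pft f S (\<xi>, y) - trunc_pft f R (\<xi>, y) = ftr g \<xi>" for \<xi>
    unfolding trunc_pft_slice[OF fm] ftr_diff[OF iS iR] g_def left_diff_distrib ..
  have "(\<integral>\<^sup>+ \<xi>. ennreal ((cmod (trunc_pft f S (\<xi>, y) - trunc_pft f R (\<xi>, y)))^2) \<partial>lborel)
      = (\<integral>\<^sup>+ \<xi>. ennreal ((cmod (ftr g \<xi>))^2) \<partial>lborel)" by (simp add: eq)
  also have "\<dots> \<le> ennreal (2*pi) * (\<integral>\<^sup>+ x. ennreal ((g x)^2) \<partial>lborel)"
    by (rule plancherel_le[OF gm gi])
  also have "\<dots> \<le> ennreal (2*pi) * (\<integral>\<^sup>+ x. ennreal ((f x y)^2 * of_bool (min R S < \<bar>x\<bar>)) \<partial>lborel)"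
  proof (intro mult_left_mono nn_integral_mono ennreal_leI)
    fix x
    have "(indicator {-S..S} x - indicator {-R..R} x :: real)^2 \<le> of_bool (min R S < \<bar>x\<bar>)"
      by (auto simp: indicator_def abs_le_iff)
    then show "(g x)^2 \<le> (f x y)^2 * of_bool (min R S < \<bar>x\<bar>)"
      unfolding g_def power_mult_distrib by (metis mult.commute mult_right_mono zero_le_power2)
  qed simp
  finally show ?thesis .
qed

lemma swapP:
  fixes f :: "real \<Rightarrow> real \<Rightarrow> real"
  assumes fm: "(\<lambda>z. f (fst z) (snd z)) \<in> borel_measurable borel"
  shows "(\<lambda>w. f (snd w) (fst w)) \<in> borel_measurable (lborel \<Otimes>\<^sub>M lborel)"
proof -
  have "(\<lambda>w::real\<times>real. (snd w, fst w)) \<in> measurable (lborel \<Otimes>\<^sub>M lborel) (lborel \<Otimes>\<^sub>M lborel)"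
    by measurable
  from measurable_compose[OF this pairP[OF fm]] show ?thesis by simp
qed

lemma cauchy_bound:
  fixes f :: "real \<Rightarrow> real \<Rightarrow> real"
  assumes fm: "(\<lambda>z. f (fst z) (snd z)) \<in> borel_measurable borel"
    and fL2: "(\<integral>\<^sup>+ z\<in>strip M. ennreal ((f (fst z) (snd z))^2) \<partial>lborel) < \<infinity>"
  shows "(\<integral>\<^sup>+ z\<in>strip M. ennreal ((cmod (trunc_pft f S z - trunc_pft f R z))^2) \<partial>lborel)
     \<le> ennreal (2*pi) * ftail M f (min R S)"
proof -
  note [measurable] = trunc_pft_measurable[OF fm] pairP[OF fm] swapP[OF fm] slice_meas[OF fm]
  define Q where "Q y = (\<integral>\<^sup>+ x. ennreal ((f x y)^2) \<partial>lborel)" for y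
  have Qm[measurable]: "Q \<in> borel_measurable lborel"
    unfolding Q_def[abs_def] by (rule lborel.borel_measurable_nn_integral) (simp add: case_prod_beta)
  have "(\<integral>\<^sup>+ z\<in>strip M. ennreal ((f (fst z) (snd z))^2) \<partial>lborel)
      = (\<integral>\<^sup>+ y. \<integral>\<^sup>+ a. ennreal ((f a y)^2) * indicator {0..M} y \<partial>lborel \<partial>lborel)"
    by (subst strip_nn_snd) auto
  also have "\<dots> = (\<integral>\<^sup>+ y. Q y * indicator {0..M} y \<partial>lborel)"
    unfolding Q_def by (intro nn_integral_cong nn_integral_multc) auto
  finally have fin: "(\<integral>\<^sup>+ y. Q y * indicator {0..M} y \<partial>lborel) \<noteq> \<infinity>" using fL2 by simp
  have AE: "AE y in lborel. Q y * indicator {0..M} y \<noteq> \<infinity>"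
    by (rule nn_integral_PInf_AE[OF _ fin]) measurable
  have "(\<integral>\<^sup>+ z\<in>strip M. ennreal ((cmod (trunc_pft f S z - trunc_pft f R z))^2) \<partial>lborel)
      = (\<integral>\<^sup>+ y. \<integral>\<^sup>+ \<xi>. ennreal ((cmod (trunc_pft f S (\<xi>, y) - trunc_pft f R (\<xi>, y)))^2) * indicator {0..M} y \<partial>lborel \<partial>lborel)"
    by (subst strip_nn_snd) auto
  also have "\<dots> \<le> (\<integral>\<^sup>+ y. ennreal (2*pi) * ((\<integral>\<^sup>+ x. ennreal ((f x y)^2 * of_bool (min R S < \<bar>x\<bar>)) \<partial>lborel) * indicator {0..M} y) \<partial>lborel)"
  proof (rule nn_integral_mono_AE)
    show "AE y in lborel. (\<integral>\<^sup>+ \<xi>. ennreal ((cmod (trunc_pft f S (\<xi>, y) - trunc_pft f R (\<xi>, y)))^2) * indicator {0..M} y \<partial>lborel)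
        \<le> ennreal (2*pi) * ((\<integral>\<^sup>+ x. ennreal ((f x y)^2 * of_bool (min R S < \<bar>x\<bar>)) \<partial>lborel) * indicator {0..M} y)"
      using AE
    proof eventually_elim
      case (elim y)
      show ?case
      proof (cases "y \<in> {0..M}")
        case True
        then have "Q y < \<infinity>" using elim by (simp add: top.not_eq_extremum)
        then show ?thesis using True slice_bound[OF fm, of y S R] by (simp add: Q_def)
      next
        case False then show ?thesis by simp
      qed
    qed
  qed
  also have "\<dots> = ennreal (2*pi) * (\<integral>\<^sup>+ y. (\<integral>\<^sup>+ x. ennreal ((f x y)^2 * of_bool (min R S < \<bar>x\<bar>)) \<partial>lborel) * indicator {0..M} y \<partial>lborel)"
    by (rule nn_integral_cmult) measurable
  also have "(\<integral>\<^sup>+ y. (\<integral>\<^sup>+ x. ennreal ((f x y)^2 * of_bool (min R S < \<bar>x\<bar>)) \<partial>lborel) * indicator {0..M} y \<partial>lborel)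
      = ftail M f (min R S)"
    unfolding ftail_def by (subst strip_nn_snd) (auto intro!: nn_integral_cong simp: nn_integral_multc)
  finally show ?thesis .
qed

lemma strip_borel[measurable]: "strip M \<in> sets borel"
  unfolding strip_def by (intro borel_closed closed_Times) auto

lemma unpairP: "h \<in> borel_measurable (lborel \<Otimes>\<^sub>M lborel) \<Longrightarrow> h \<in> borel_measurable (borel :: (real \<times> real) measure)"
  by (simp add: lborel_prod)

lemma strip_sets_pair[measurable]: "strip M \<in> sets (lborel \<Otimes>\<^sub>M lborel)"
  unfolding lborel_prod by simp

lemma lborelP: "h \<in> borel_measurable (lborel \<Otimes>\<^sub>M lborel) \<Longrightarrow> h \<in> borel_measurable (lborel :: (real \<times> real) measure)"
  by (simp add: lborel_prod)

lemma ftail_le: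
  "ftail M f r \<le> (\<integral>\<^sup>+ z\<in>strip M. ennreal ((f (fst z) (snd z))^2) \<partial>lborel)"
  unfolding ftail_def
  by (intro nn_integral_mono mult_right_mono ennreal_leI) (auto simp: of_bool_def)

lemma ftail_mono:
  "r \<le> r' \<Longrightarrow> ftail M f r' \<le> ftail M f r"
  unfolding ftail_def
  by (intro nn_integral_mono mult_right_mono ennreal_leI) (auto simp: of_bool_def)

lemma ftail_tendsto:
  fixes f :: "real \<Rightarrow> real \<Rightarrow> real"
  assumes fm: "(\<lambda>z. f (fst z) (snd z)) \<in> borel_measurable borel"
    and fL2: "(\<integral>\<^sup>+ z\<in>strip M. ennreal ((f (fst z) (snd z))^2) \<partial>lborel) < \<infinity>"
  shows "(ftail M f \<longlongrightarrow> 0) at_top"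
proof -
  define u where "u i z = ennreal ((f (fst z) (snd z))^2 * of_bool (real i < \<bar>fst z\<bar>)) * indicator (strip M) z" for i :: nat and z
  note [measurable] = pairP[OF fm]
  have um: "u i \<in> borel_measurable lborel" for i unfolding u_def[abs_def] by (rule lborelP) measurable
  have "(\<integral>\<^sup>+ z. (INF i. u i z) \<partial>lborel) = (INF i. integral\<^sup>N lborel (u i))"
  proof (rule nn_integral_monotone_convergence_INF_AE')
    show "AE z in lborel. u (Suc i) z \<le> u i z" for i
      unfolding u_def by (intro AE_I2 mult_right_mono ennreal_leI) (auto simp: of_bool_def)
    show "u i \<in> borel_measurable lborel" for i by (rule um)
    show "(\<integral>\<^sup>+ z. u 0 z \<partial>lborel) < \<infinity>"
      using ftail_le[of M f 0] fL2 unfolding u_def ftail_def by simp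
  qed
  moreover have "(INF i. u i z) = 0" for z
  proof -
    have "(INF i. u i z) \<le> u (nat \<lceil>\<bar>fst z\<bar>\<rceil>) z" by (rule INF_lower) simp
    also have "u (nat \<lceil>\<bar>fst z\<bar>\<rceil>) z = 0"
      unfolding u_def by (simp add: of_bool_def not_less) linarith
    finally show ?thesis by simp
  qed
  ultimately have INF0: "(INF i. ftail M f (real i)) = 0"
    by (simp add: u_def[abs_def] ftail_def)
  show ?thesis
  proof (rule order_tendstoI)
    fix a :: ennreal assume "0 < a"
    then obtain i where i: "ftail M f (real i) < a" using INF0 by (metis INF_less_iff UNIV_I)
    show "eventually (\<lambda>r. ftail M f r < a) at_top"
      unfolding eventually_at_top_linorder
      by (rule exI[of _ "real i"]) (use i ftail_mono in \<open>blast intro: le_less_trans\<close>)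
  next
    fix a :: ennreal assume "a < 0" then show "eventually (\<lambda>r. a < ftail M f r) at_top" by simp
  qed
qed

lemma trunc_pft_zero: "trunc_pft f 0 z = 0"
proof -
  have "AE x in lborel. indicator {-0..0::real} x *\<^sub>R (complex_of_real (f x (snd z)) * cis (- x * fst z)) = 0"
    using AE_lborel_singleton[of "0::real"] by eventually_elim (simp add: indicator_def)
  then show ?thesis unfolding trunc_pft_def set_lebesgue_integral_def by (rule integral_eq_zero_AE)
qed

lemma geom_summable:
  fixes a :: "nat \<Rightarrow> complex"
  assumes "\<And>k. 2^k * (cmod (a k))^2 \<le> w"
  shows "summable a"
proof -
  have w0: "0 \<le> w" using assms[of 0] by (metis order_trans mult_nonneg_nonneg zero_le_numeral zero_le_power zero_le_power2)
  have b: "cmod (a k) \<le> sqrt w * (sqrt (1/2))^k" for k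
  proof -
    have "(cmod (a k))^2 \<le> w * (1/2)^k"
      using assms[of k] by (simp add: field_simps power_divide)
    then have "sqrt ((cmod (a k))^2) \<le> sqrt (w * (1/2)^k)" by (rule real_sqrt_le_mono)
    then show ?thesis by (simp add: real_sqrt_mult real_sqrt_power)
  qed
  have "summable (\<lambda>k. sqrt w * (sqrt (1/2))^k)"
    by (intro summable_mult summable_geometric) simp
  then have "summable (\<lambda>k. norm (a k))"
    by (rule summable_comparison_test'[where N=0]) (use b in simp)
  then show ?thesis by (rule summable_norm_cancel)
qed

lemma telescope_convergent:
  fixes X :: "nat \<Rightarrow> complex"
  assumes "summable (\<lambda>k. X (Suc k) - X k)"
  shows "convergent X"
proof -
  have "(\<lambda>n. \<Sum>k<n. X (Suc k) - X k) \<longlonglongrightarrow> (\<Sum>k. X (Suc k) - X k)"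
    using assms by (rule summable_LIMSEQ)
  then have "(\<lambda>n. X 0 + (\<Sum>k<n. X (Suc k) - X k)) \<longlonglongrightarrow> X 0 + (\<Sum>k. X (Suc k) - X k)"
    by (intro tendsto_intros)
  moreover have "X 0 + (\<Sum>k<n. X (Suc k) - X k) = X n" for n
    by (simp add: sum_lessThan_telescope)
  ultimately show ?thesis unfolding convergent_def by auto
qed

lemma pft_exists:
  fixes f :: "real \<Rightarrow> real \<Rightarrow> real"
  assumes fm: "(\<lambda>z. f (fst z) (snd z)) \<in> borel_measurable borel"
    and fL2: "(\<integral>\<^sup>+ z\<in>strip M. ennreal ((f (fst z) (snd z))^2) \<partial>lborel) < \<infinity>"
  shows "\<exists>F. F \<in> borel_measurable lborel \<and>
      (\<integral>\<^sup>+ z \<in> strip M. ennreal ((cmod (F z))\<^sup>2) \<partial>lborel) < \<infinity> \<and>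
      ((\<lambda>R. \<integral>\<^sup>+ z \<in> strip M. ennreal ((cmod (trunc_pft f R z - F z))\<^sup>2) \<partial>lborel) \<longlongrightarrow> 0) at_top"
proof -
  note [measurable] = trunc_pft_measurable[OF fm] pairP[OF fm]
  define E where "E k = ennreal ((1/8)^k)" for k :: nat
  have "\<forall>k. \<exists>N. \<forall>r\<ge>N. ftail M f r < E k"
  proof
    fix k
    have "0 < E k" unfolding E_def by simp
    from order_tendstoD(2)[OF ftail_tendsto[OF fm fL2] this]
    show "\<exists>N. \<forall>r\<ge>N. ftail M f r < E k" unfolding eventually_at_top_linorder .
  qed
  then obtain N where N: "\<And>k r. r \<ge> N k \<Longrightarrow> ftail M f r < E k" by metis
  define \<rho> where "\<rho> k = max (N k) (real k)" for k
  define D where "D k z = trunc_pft f (\<rho> (Suc k)) z - trunc_pft f (\<rho> k) z" for k z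
  have Dm[measurable]: "D k \<in> borel_measurable (lborel \<Otimes>\<^sub>M lborel)" for k
    unfolding D_def[abs_def] by measurable
  have Ele: "E (Suc k) \<le> E k" for k unfolding E_def by (intro ennreal_leI) (simp add: power_decreasing)
  have Dk: "(\<integral>\<^sup>+ z\<in>strip M. ennreal ((cmod (D k z))^2) \<partial>lborel) \<le> ennreal (2*pi) * E k" for k
  proof -
    have "ftail M f (min (\<rho> k) (\<rho> (Suc k))) \<le> E k"
    proof (cases "\<rho> k \<le> \<rho> (Suc k)")
      case True
      then have "min (\<rho> k) (\<rho> (Suc k)) = \<rho> k" by simp
      moreover have "ftail M f (\<rho> k) < E k" using N[of k "\<rho> k"] by (simp add: \<rho>_def)
      ultimately show ?thesis by simp
    next
      case False
      then have "min (\<rho> k) (\<rho> (Suc k)) = \<rho> (Suc k)" by simp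
      moreover have "ftail M f (\<rho> (Suc k)) < E (Suc k)" using N[of "Suc k" "\<rho> (Suc k)"] by (simp add: \<rho>_def)
      ultimately show ?thesis using Ele[of k] by simp
    qed
    then show ?thesis unfolding D_def
      using cauchy_bound[OF fm fL2, of "\<rho> (Suc k)" "\<rho> k"] by (meson mult_left_mono order_trans zero_le)
  qed
  define W where "W z = (\<Sum>k. ennreal (2^k * (cmod (D k z))^2))" for z
  have Wm[measurable]: "W \<in> borel_measurable (lborel \<Otimes>\<^sub>M lborel)" unfolding W_def[abs_def] by measurable
  have termb: "(\<integral>\<^sup>+ z\<in>strip M. ennreal (2^k * (cmod (D k z))^2) \<partial>lborel) \<le> ennreal (2*pi*(1/4)^k)" for k
  proof -
    have "(\<integral>\<^sup>+ z\<in>strip M. ennreal (2^k * (cmod (D k z))^2) \<partial>lborel)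
        = (\<integral>\<^sup>+ z. ennreal (2^k) * (ennreal ((cmod (D k z))^2) * indicator (strip M) z) \<partial>lborel)"
      by (intro nn_integral_cong) (simp add: ennreal_mult mult.assoc)
    also have "\<dots> = ennreal (2^k) * (\<integral>\<^sup>+ z\<in>strip M. ennreal ((cmod (D k z))^2) \<partial>lborel)"
      by (rule nn_integral_cmult) (rule lborelP, measurable)
    also have "\<dots> \<le> ennreal (2^k) * (ennreal (2*pi) * E k)"
      by (intro mult_left_mono Dk) simp
    also have "\<dots> = ennreal (2*pi*(1/4)^k)"
    proof -
      have "(2::real)^k * (2*pi * (1/8)^k) = 2*pi*(1/4)^k"
        by (simp add: power_mult_distrib[symmetric] field_simps)
      moreover have "ennreal (2^k) * (ennreal (2*pi) * ennreal ((1/8)^k)) = ennreal ((2::real)^k * (2*pi * (1/8)^k))"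
        by (simp add: ennreal_mult)
      ultimately show ?thesis unfolding E_def by simp
    qed
    finally show ?thesis .
  qed
  have Wint: "(\<integral>\<^sup>+ z. W z * indicator (strip M) z \<partial>lborel) \<noteq> \<infinity>"
  proof -
    have "(\<integral>\<^sup>+ z. W z * indicator (strip M) z \<partial>lborel)
        = (\<integral>\<^sup>+ z. (\<Sum>k. ennreal (2^k * (cmod (D k z))^2) * indicator (strip M) z) \<partial>lborel)"
      unfolding W_def by simp
    also have "\<dots> = (\<Sum>k. \<integral>\<^sup>+ z\<in>strip M. ennreal (2^k * (cmod (D k z))^2) \<partial>lborel)"
      by (rule nn_integral_suminf) (rule lborelP, measurable)
    also have "\<dots> \<le> (\<Sum>k. ennreal (2*pi*(1/4)^k))"
      by (intro suminf_le termb) auto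
    also have "\<dots> = ennreal (\<Sum>k. 2*pi*(1/4)^k)"
      by (intro suminf_ennreal2) (auto intro!: summable_mult summable_geometric)
    finally show ?thesis by (auto simp: top_unique)
  qed
  have AEW: "AE z in lborel. W z * indicator (strip M) z \<noteq> \<infinity>"
    by (rule nn_integral_PInf_AE[OF _ Wint]) (rule lborelP, measurable)
  define F where "F z = lim (\<lambda>k. trunc_pft f (\<rho> k) z)" for z
  have Fm[measurable]: "F \<in> borel_measurable (lborel \<Otimes>\<^sub>M lborel)" unfolding F_def[abs_def] by measurable
  have AEconv: "AE z in lborel. z \<in> strip M \<longrightarrow> (\<lambda>k. trunc_pft f (\<rho> k) z) \<longlonglongrightarrow> F z"
    using AEW
  proof eventually_elim
    case (elim z)
    show ?case
    proof
      assume zs: "z \<in> strip M"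
      then have Wfin: "W z \<noteq> \<infinity>" using elim by simp
      have "2^k * (cmod (D k z))^2 \<le> enn2real (W z)" for k
      proof -
        have "ennreal (2^k * (cmod (D k z))^2) \<le> W z"
        proof -
          have "sum (\<lambda>k. ennreal (2^k * (cmod (D k z))^2)) {k} \<le> (\<Sum>k. ennreal (2^k * (cmod (D k z))^2))"
            by (rule sum_le_suminf) (simp_all add: summableI)
          then show ?thesis unfolding W_def by simp
        qed
        also have "W z = ennreal (enn2real (W z))" using Wfin by (simp add: less_top)
        finally show ?thesis by (subst (asm) ennreal_le_iff) auto
      qed
      then have "summable (\<lambda>k. D k z)" by (rule geom_summable)
      then have "convergent (\<lambda>k. trunc_pft f (\<rho> k) z)"
        unfolding D_def by (rule telescope_convergent)
      then show "(\<lambda>k. trunc_pft f (\<rho> k) z) \<longlonglongrightarrow> F z"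
        unfolding F_def by (simp add: convergent_LIMSEQ_iff)
    qed
  qed
  have fatou: "(\<integral>\<^sup>+ z\<in>strip M. ennreal ((cmod (trunc_pft f R z - F z))^2) \<partial>lborel) \<le> ennreal (2*pi) * ftail M f R" for R
  proof -
    define h where "h k z = ennreal ((cmod (trunc_pft f R z - trunc_pft f (\<rho> k) z))^2) * indicator (strip M) z" for k z
    have hm: "h k \<in> borel_measurable lborel" for k unfolding h_def[abs_def] by (rule lborelP) measurable
    have "(\<integral>\<^sup>+ z\<in>strip M. ennreal ((cmod (trunc_pft f R z - F z))^2) \<partial>lborel) = (\<integral>\<^sup>+ z. liminf (\<lambda>k. h k z) \<partial>lborel)"
    proof (rule nn_integral_cong_AE)
      show "AE z in lborel. ennreal ((cmod (trunc_pft f R z - F z))^2) * indicator (strip M) z = liminf (\<lambda>k. h k z)"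
        using AEconv
      proof eventually_elim
        case (elim z)
        show ?case
        proof (cases "z \<in> strip M")
          case True
          then have "(\<lambda>k. trunc_pft f (\<rho> k) z) \<longlonglongrightarrow> F z" using elim by simp
          then have "(\<lambda>k. ennreal ((cmod (trunc_pft f R z - trunc_pft f (\<rho> k) z))^2)) \<longlonglongrightarrow> ennreal ((cmod (trunc_pft f R z - F z))^2)"
            by (intro tendsto_ennrealI tendsto_intros)
          then have "liminf (\<lambda>k. ennreal ((cmod (trunc_pft f R z - trunc_pft f (\<rho> k) z))^2)) = ennreal ((cmod (trunc_pft f R z - F z))^2)"
            by (intro lim_imp_Liminf) auto
          then show ?thesis using True by (simp add: h_def)
        next
          case False then show ?thesis by (simp add: h_def Liminf_const)
        qed
      qed
    qed
    also have "\<dots> \<le> liminf (\<lambda>k. integral\<^sup>N lborel (h k))"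
      by (rule nn_integral_liminf) (rule hm)
    also have "\<dots> \<le> limsup (\<lambda>k. integral\<^sup>N lborel (h k))"
      by (rule Liminf_le_Limsup) simp
    also have "\<dots> \<le> ennreal (2*pi) * ftail M f R"
    proof (rule Limsup_bounded)
      show "eventually (\<lambda>k. integral\<^sup>N lborel (h k) \<le> ennreal (2*pi) * ftail M f R) sequentially"
        unfolding eventually_sequentially
      proof (intro exI allI impI)
        fix k assume k: "nat \<lceil>R\<rceil> \<le> k"
        then have "R \<le> \<rho> k" unfolding \<rho>_def by linarith
        then have "min (\<rho> k) R = R" by simp
        then show "integral\<^sup>N lborel (h k) \<le> ennreal (2*pi) * ftail M f R"
          using cauchy_bound[OF fm fL2, of R "\<rho> k"] unfolding h_def by simp
      qed
    qed
    finally show ?thesis .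
  qed
  show ?thesis
  proof (intro exI conjI)
    show "F \<in> borel_measurable lborel" by (rule lborelP) (rule Fm)
    have "(\<integral>\<^sup>+ z\<in>strip M. ennreal ((cmod (F z))^2) \<partial>lborel) \<le> ennreal (2*pi) * ftail M f 0"
      using fatou[of 0] by (simp add: trunc_pft_zero)
    also have "\<dots> < \<infinity>"
      using ftail_le[of M f 0] fL2 by (simp add: ennreal_mult_less_top le_less_trans)
    finally show "(\<integral>\<^sup>+ z\<in>strip M. ennreal ((cmod (F z))^2) \<partial>lborel) < \<infinity>" .
    have lim2: "((\<lambda>R. ennreal (2*pi) * ftail M f R) \<longlongrightarrow> ennreal (2*pi) * 0) at_top"
      by (intro ennreal_tendsto_cmult ftail_tendsto[OF fm fL2]) simp
    show "((\<lambda>R. \<integral>\<^sup>+ z \<in> strip M. ennreal ((cmod (trunc_pft f R z - F z))\<^sup>2) \<partial>lborel) \<longlongrightarrow> 0) at_top"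
    proof (rule tendsto_sandwich[OF _ _ tendsto_const])
      show "eventually (\<lambda>R. 0 \<le> (\<integral>\<^sup>+ z \<in> strip M. ennreal ((cmod (trunc_pft f R z - F z))\<^sup>2) \<partial>lborel)) at_top"
        by simp
      show "eventually (\<lambda>R. (\<integral>\<^sup>+ z \<in> strip M. ennreal ((cmod (trunc_pft f R z - F z))\<^sup>2) \<partial>lborel) \<le> ennreal (2*pi) * ftail M f R) at_top"
        using fatou by simp
      show "((\<lambda>R. ennreal (2*pi) * ftail M f R) \<longlongrightarrow> 0) at_top" using lim2 by simp
    qed
  qed
qed

lemma L2_interval_integrable_gen:
  fixes \<phi> :: "real \<Rightarrow> 'b::{banach, second_countable_topology}"
  assumes [measurable]: "\<phi> \<in> borel_measurable borel" and fin: "(\<integral>\<^sup>+ x\<in>{a..b}. ennreal ((norm (\<phi> x))^2) \<partial>lborel) < \<infinity>"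
  shows "integrable lborel (\<lambda>x. indicator {a..b} x *\<^sub>R \<phi> x)"
proof (rule integrableI_bounded)
  show "(\<lambda>x. indicator {a..b} x *\<^sub>R \<phi> x) \<in> borel_measurable lborel" by measurable
  have "(\<integral>\<^sup>+ x. ennreal (norm (indicator {a..b} x *\<^sub>R \<phi> x)) \<partial>lborel)
      = (\<integral>\<^sup>+ x. ennreal (indicator {a..b} x) * (ennreal (norm (\<phi> x)) * indicator {a..b} x) \<partial>lborel)"
    by (intro nn_integral_cong) (simp add: indicator_def)
  also have "\<dots> < \<infinity>"
  proof -
    have "(\<integral>\<^sup>+ x. ennreal (indicator {a..b} x) * (ennreal (norm (\<phi> x)) * indicator {a..b} x) \<partial>lborel)^2
        \<le> (\<integral>\<^sup>+ x. (ennreal (indicator {a..b} x))^2 \<partial>lborel) * (\<integral>\<^sup>+ x. (ennreal (norm (\<phi> x)) * indicator {a..b} x)^2 \<partial>lborel)"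
      by (rule Cauchy_Schwarz_nn_integral) measurable
    also have "(\<integral>\<^sup>+ x. (ennreal (indicator {a..b} x))^2 \<partial>lborel) = (\<integral>\<^sup>+ x. indicator {a..b} x \<partial>lborel)"
      by (intro nn_integral_cong) (simp add: indicator_def)
    also have "\<dots> = emeasure lborel {a..b}" by simp
    also have "(\<integral>\<^sup>+ x. (ennreal (norm (\<phi> x)) * indicator {a..b} x)^2 \<partial>lborel) = (\<integral>\<^sup>+ x\<in>{a..b}. ennreal ((norm (\<phi> x))^2) \<partial>lborel)"
      by (intro nn_integral_cong) (simp add: indicator_def ennreal_power)
    also have "emeasure lborel {a..b} * (\<integral>\<^sup>+ x\<in>{a..b}. ennreal ((norm (\<phi> x))^2) \<partial>lborel) < \<infinity>"
    proof -
      have "emeasure lborel {a..b} < \<infinity>" by (cases "a \<le> b") auto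
      then show ?thesis using fin by (simp add: ennreal_mult_less_top)
    qed
    finally show ?thesis by (simp add: power_less_top_ennreal)
  qed
  finally show "(\<integral>\<^sup>+ x. ennreal (norm (indicator {a..b} x *\<^sub>R \<phi> x)) \<partial>lborel) < \<infinity>" .
qed

lemma CSy:
  fixes u :: "real \<Rightarrow> complex"
  assumes [measurable]: "u \<in> borel_measurable borel" and M: "0 \<le> M"
  shows "ennreal ((cmod (LINT y:{0..M}|lborel. u y))^2) \<le> ennreal M * (\<integral>\<^sup>+ y\<in>{0..M}. ennreal ((cmod (u y))^2) \<partial>lborel)"
proof -
  have "ennreal (cmod (LINT y:{0..M}|lborel. u y)) \<le> (\<integral>\<^sup>+ y. ennreal (norm (indicator {0..M} y *\<^sub>R u y)) \<partial>lborel)"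
    unfolding set_lebesgue_integral_def by (rule norm_integral_le_nn)
  also have "\<dots> = (\<integral>\<^sup>+ y. ennreal (indicator {0..M} y) * (ennreal (cmod (u y)) * indicator {0..M} y) \<partial>lborel)"
    by (intro nn_integral_cong) (simp add: indicator_def)
  finally have "(ennreal (cmod (LINT y:{0..M}|lborel. u y)))^2 \<le> (\<integral>\<^sup>+ y. ennreal (indicator {0..M} y) * (ennreal (cmod (u y)) * indicator {0..M} y) \<partial>lborel)^2"
    by (rule power_mono) simp
  also have "\<dots> \<le> (\<integral>\<^sup>+ y. (ennreal (indicator {0..M} y))^2 \<partial>lborel) * (\<integral>\<^sup>+ y. (ennreal (cmod (u y)) * indicator {0..M} y)^2 \<partial>lborel)"
    by (rule Cauchy_Schwarz_nn_integral) measurable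
  also have "(\<integral>\<^sup>+ y. (ennreal (indicator {0..M} y))^2 \<partial>lborel) = (\<integral>\<^sup>+ y. indicator {0..M} y \<partial>lborel)"
    by (intro nn_integral_cong) (simp add: indicator_def)
  also have "\<dots> = ennreal M" using M by simp
  also have "(\<integral>\<^sup>+ y. (ennreal (cmod (u y)) * indicator {0..M} y)^2 \<partial>lborel) = (\<integral>\<^sup>+ y\<in>{0..M}. ennreal ((cmod (u y))^2) \<partial>lborel)"
    by (intro nn_integral_cong) (simp add: indicator_def ennreal_power)
  finally show ?thesis by (simp add: ennreal_power)
qed

lemma inv_sq_integral:
  assumes d: "0 < d" and M: "0 \<le> M"
  shows "(\<integral>\<^sup>+ y\<in>{0..M}. ennreal (1 / (d + y)^2) \<partial>lborel) \<le> ennreal (1 / d)"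
proof -
  have "(\<integral>\<^sup>+ y\<in>{0..M}. ennreal (1 / (d + y)^2) \<partial>lborel) = ennreal ((- 1 / (d + M)) - (- 1 / (d + 0)))"
  proof (rule nn_integral_FTC_Icc)
    show "(\<lambda>y. 1 / (d + y)^2) \<in> borel_measurable borel" by measurable
    show "((\<lambda>y. - 1 / (d + y)) has_real_derivative 1 / (d + y)^2) (at y)" if "y \<in> {0..M}" for y
      using that d by (auto intro!: derivative_eq_intros simp: power2_eq_square field_simps)
    show "0 \<le> 1 / (d + y)^2" for y by simp
  qed (use M in auto)
  also have "\<dots> \<le> ennreal (1 / d)"
  proof (intro ennreal_leI)
    have "0 \<le> 1 / (d + M)" using d M by simp
    then show "- 1 / (d + M) - (- 1 / (d + 0)) \<le> 1 / d" by simp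
  qed
  finally show ?thesis .
qed

lemma L2_limit_unique:
  fixes T :: "real \<Rightarrow> real \<Rightarrow> complex"
  assumes Tm: "\<And>R. T R \<in> borel_measurable borel"
    and h1m: "h1 \<in> borel_measurable borel" and h2m: "h2 \<in> borel_measurable borel"
    and l1: "((\<lambda>R. \<integral>\<^sup>+ \<xi>. ennreal ((cmod (T R \<xi> - h1 \<xi>))\<^sup>2) \<partial>lborel) \<longlongrightarrow> 0) at_top"
    and l2: "((\<lambda>R. \<integral>\<^sup>+ \<xi>. ennreal ((cmod (T R \<xi> - h2 \<xi>))\<^sup>2) \<partial>lborel) \<longlongrightarrow> 0) at_top"
  shows "AE \<xi> in lborel. h1 \<xi> = h2 \<xi>"
proof -
  note [measurable] = Tm h1m h2m
  have bound: "(\<integral>\<^sup>+ \<xi>. ennreal ((cmod (h1 \<xi> - h2 \<xi>))\<^sup>2) \<partial>lborel)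
      \<le> 2 * (\<integral>\<^sup>+ \<xi>. ennreal ((cmod (T R \<xi> - h1 \<xi>))\<^sup>2) \<partial>lborel) + 2 * (\<integral>\<^sup>+ \<xi>. ennreal ((cmod (T R \<xi> - h2 \<xi>))\<^sup>2) \<partial>lborel)" for R
  proof -
    have "(\<integral>\<^sup>+ \<xi>. ennreal ((cmod (h1 \<xi> - h2 \<xi>))\<^sup>2) \<partial>lborel)
        \<le> (\<integral>\<^sup>+ \<xi>. 2 * ennreal ((cmod (T R \<xi> - h1 \<xi>))\<^sup>2) + 2 * ennreal ((cmod (T R \<xi> - h2 \<xi>))\<^sup>2) \<partial>lborel)"
    proof (intro nn_integral_mono)
      fix \<xi>
      have "cmod (h1 \<xi> - h2 \<xi>) \<le> cmod (T R \<xi> - h1 \<xi>) + cmod (T R \<xi> - h2 \<xi>)"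
        by (metis norm_minus_commute norm_triangle_ineq4 diff_diff_eq2 add.commute diff_add_cancel norm_diff_triangle_ineq)
      then have "(cmod (h1 \<xi> - h2 \<xi>))^2 \<le> (cmod (T R \<xi> - h1 \<xi>) + cmod (T R \<xi> - h2 \<xi>))^2"
        by (intro power_mono) auto
      also have "\<dots> \<le> 2 * (cmod (T R \<xi> - h1 \<xi>))^2 + 2 * (cmod (T R \<xi> - h2 \<xi>))^2"
        using zero_le_power2[of "cmod (T R \<xi> - h1 \<xi>) - cmod (T R \<xi> - h2 \<xi>)"] unfolding power2_sum power2_diff by linarith
      finally have "ennreal ((cmod (h1 \<xi> - h2 \<xi>))^2) \<le> ennreal (2 * (cmod (T R \<xi> - h1 \<xi>))^2 + 2 * (cmod (T R \<xi> - h2 \<xi>))^2)"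
        by (rule ennreal_leI)
      then show "ennreal ((cmod (h1 \<xi> - h2 \<xi>))^2) \<le> 2 * ennreal ((cmod (T R \<xi> - h1 \<xi>))^2) + 2 * ennreal ((cmod (T R \<xi> - h2 \<xi>))^2)"
      proof -
        note that = \<open>ennreal ((cmod (h1 \<xi> - h2 \<xi>))^2) \<le> ennreal (2 * (cmod (T R \<xi> - h1 \<xi>))^2 + 2 * (cmod (T R \<xi> - h2 \<xi>))^2)\<close>
        have e2: "ennreal (2 * x) = 2 * ennreal x" if "0 \<le> x" for x :: real
          using that by (simp add: ennreal_mult)
        have "ennreal (2 * (cmod (T R \<xi> - h1 \<xi>))^2 + 2 * (cmod (T R \<xi> - h2 \<xi>))^2)
            = ennreal (2 * (cmod (T R \<xi> - h1 \<xi>))^2) + ennreal (2 * (cmod (T R \<xi> - h2 \<xi>))^2)"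
          by (rule ennreal_plus) auto
        also have "\<dots> = 2 * ennreal ((cmod (T R \<xi> - h1 \<xi>))^2) + 2 * ennreal ((cmod (T R \<xi> - h2 \<xi>))^2)"
          by (simp only: e2 zero_le_power2)
        finally show ?thesis using that by simp
      qed
    qed
    also have "\<dots> = 2 * (\<integral>\<^sup>+ \<xi>. ennreal ((cmod (T R \<xi> - h1 \<xi>))\<^sup>2) \<partial>lborel) + 2 * (\<integral>\<^sup>+ \<xi>. ennreal ((cmod (T R \<xi> - h2 \<xi>))\<^sup>2) \<partial>lborel)"
      by (subst nn_integral_add, measurable, subst nn_integral_cmult, measurable, subst nn_integral_cmult, measurable) 
    finally show ?thesis .
  qed
  have lim: "((\<lambda>R. 2 * (\<integral>\<^sup>+ \<xi>. ennreal ((cmod (T R \<xi> - h1 \<xi>))\<^sup>2) \<partial>lborel) + 2 * (\<integral>\<^sup>+ \<xi>. ennreal ((cmod (T R \<xi> - h2 \<xi>))\<^sup>2) \<partial>lborel)) \<longlongrightarrow> 2 * 0 + 2 * 0) at_top"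
    by (intro tendsto_add ennreal_tendsto_cmult l1 l2) auto
  have "(\<integral>\<^sup>+ \<xi>. ennreal ((cmod (h1 \<xi> - h2 \<xi>))\<^sup>2) \<partial>lborel) \<le> 2 * 0 + 2 * 0"
    by (rule tendsto_le[OF trivial_limit_at_top_linorder lim tendsto_const]) (rule always_eventually, rule allI, rule bound)
  then have "(\<integral>\<^sup>+ \<xi>. ennreal ((cmod (h1 \<xi> - h2 \<xi>))\<^sup>2) \<partial>lborel) = 0" by simp
  then have "AE \<xi> in lborel. ennreal ((cmod (h1 \<xi> - h2 \<xi>))\<^sup>2) = 0"
    by (subst (asm) nn_integral_0_iff_AE) auto
  then show ?thesis by eventually_elim simp
qed

lemma L2_set_integrable:
  fixes \<phi> :: "'a \<Rightarrow> 'b::{banach, second_countable_topology}"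
  assumes [measurable]: "\<phi> \<in> borel_measurable N" "A \<in> sets N" and A: "emeasure N A < \<infinity>"
    and fin: "(\<integral>\<^sup>+ x. ennreal ((norm (\<phi> x))^2) * indicator A x \<partial>N) < \<infinity>"
  shows "integrable N (\<lambda>x. indicator A x *\<^sub>R \<phi> x)"
proof (rule integrableI_bounded)
  show "(\<lambda>x. indicator A x *\<^sub>R \<phi> x) \<in> borel_measurable N" by measurable
  have "(\<integral>\<^sup>+ x. ennreal (norm (indicator A x *\<^sub>R \<phi> x)) \<partial>N)
      = (\<integral>\<^sup>+ x. ennreal (indicator A x) * (ennreal (norm (\<phi> x)) * indicator A x) \<partial>N)"
    by (intro nn_integral_cong) (simp add: indicator_def)
  also have "\<dots> < \<infinity>"
  proof -
    have "(\<integral>\<^sup>+ x. ennreal (indicator A x) * (ennreal (norm (\<phi> x)) * indicator A x) \<partial>N)^2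
        \<le> (\<integral>\<^sup>+ x. (ennreal (indicator A x))^2 \<partial>N) * (\<integral>\<^sup>+ x. (ennreal (norm (\<phi> x)) * indicator A x)^2 \<partial>N)"
      by (rule Cauchy_Schwarz_nn_integral) measurable
    also have "(\<integral>\<^sup>+ x. (ennreal (indicator A x))^2 \<partial>N) = (\<integral>\<^sup>+ x. indicator A x \<partial>N)"
      by (intro nn_integral_cong) (simp add: indicator_def)
    also have "\<dots> = emeasure N A" by simp
    also have "(\<integral>\<^sup>+ x. (ennreal (norm (\<phi> x)) * indicator A x)^2 \<partial>N) = (\<integral>\<^sup>+ x. ennreal ((norm (\<phi> x))^2) * indicator A x \<partial>N)"
      by (intro nn_integral_cong) (simp add: indicator_def ennreal_power)
    also have "emeasure N A * (\<integral>\<^sup>+ x. ennreal ((norm (\<phi> x))^2) * indicator A x \<partial>N) < \<infinity>"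
      using A fin by (simp add: ennreal_mult_less_top)
    finally show ?thesis by (simp add: power_less_top_ennreal)
  qed
  finally show "(\<integral>\<^sup>+ x. ennreal (norm (indicator A x *\<^sub>R \<phi> x)) \<partial>N) < \<infinity>" .
qed

lemma rect_integrable:
  fixes f :: "real \<Rightarrow> real \<Rightarrow> real"
  assumes fm: "(\<lambda>z. f (fst z) (snd z)) \<in> borel_measurable borel"
    and fL2: "(\<integral>\<^sup>+ z\<in>strip M. ennreal ((f (fst z) (snd z))^2) \<partial>lborel) < \<infinity>"
  shows "integrable (lborel \<Otimes>\<^sub>M lborel) (\<lambda>z. indicator ({-R..R} \<times> {0..M}) z *\<^sub>R f (fst z) (snd z))"
proof (rule L2_set_integrable)
  show "(\<lambda>z. f (fst z) (snd z)) \<in> borel_measurable (lborel \<Otimes>\<^sub>M lborel)" by (rule pairP[OF fm])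
  show "{-R..R} \<times> {0..M} \<in> sets (lborel \<Otimes>\<^sub>M lborel)" by simp
  show "emeasure (lborel \<Otimes>\<^sub>M lborel) ({-R..R} \<times> {0..M}) < \<infinity>"
  proof -
    have "emeasure lborel {-R..R} < \<infinity>" by (cases "-R \<le> R") auto
    moreover have "emeasure lborel {0..M} < \<infinity>" by (cases "0 \<le> M") auto
    ultimately show ?thesis by (simp add: lborel.emeasure_pair_measure_Times ennreal_mult_less_top)
  qed
  have "(\<integral>\<^sup>+ z. ennreal ((norm (f (fst z) (snd z)))^2) * indicator ({-R..R} \<times> {0..M}) z \<partial>(lborel \<Otimes>\<^sub>M lborel))
     \<le> (\<integral>\<^sup>+ z. ennreal ((f (fst z) (snd z))^2) * indicator (strip M) z \<partial>(lborel \<Otimes>\<^sub>M lborel))"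
    by (intro nn_integral_mono mult_left_mono) (auto simp: indicator_def strip_def)
  also have "\<dots> < \<infinity>" using fL2 by (simp add: lborel_prod)
  finally show "(\<integral>\<^sup>+ z. ennreal ((norm (f (fst z) (snd z)))^2) * indicator ({-R..R} \<times> {0..M}) z \<partial>(lborel \<Otimes>\<^sub>M lborel)) < \<infinity>" .
qed

lemma trunc_ft_fubini:
  fixes f :: "real \<Rightarrow> real \<Rightarrow> real"
  assumes fm: "(\<lambda>z. f (fst z) (snd z)) \<in> borel_measurable borel"
    and fL2: "(\<integral>\<^sup>+ z\<in>strip M. ennreal ((f (fst z) (snd z))^2) \<partial>lborel) < \<infinity>"
  shows "trunc_ft (\<lambda>x. complex_of_real (IM M f x)) R \<xi> = (LINT y:{0..M}|lborel. trunc_pft f R (\<xi>, y))"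
    and "set_integrable lborel {0..M} (\<lambda>y. trunc_pft f R (\<xi>, y))"
proof -
  note [measurable] = pairP[OF fm]
  define Q where "Q x y = indicator ({-R..R} \<times> {0..M}) (x, y) *\<^sub>R (complex_of_real (f x y) * cis (- x * \<xi>))" for x y
  have Qi: "integrable (lborel \<Otimes>\<^sub>M lborel) (\<lambda>(x, y). Q x y)"
  proof (rule Bochner_Integration.integrable_bound)
    show "integrable (lborel \<Otimes>\<^sub>M lborel) (\<lambda>z. indicator ({-R..R} \<times> {0..M}) z *\<^sub>R f (fst z) (snd z))"
      by (rule rect_integrable[OF fm fL2])
    show "(\<lambda>(x, y). Q x y) \<in> borel_measurable (lborel \<Otimes>\<^sub>M lborel)"
      unfolding Q_def by (simp add: case_prod_beta) measurable
    show "AE z in lborel \<Otimes>\<^sub>M lborel. norm ((\<lambda>(x, y). Q x y) z) \<le> norm (indicator ({-R..R} \<times> {0..M}) z *\<^sub>R f (fst z) (snd z))"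
      by (intro AE_I2) (auto simp: Q_def case_prod_beta norm_mult indicator_def)
  qed
  have e1: "indicator {-R..R} x *\<^sub>R (complex_of_real (IM M f x) * cis (- x * \<xi>)) = (LINT y|lborel. Q x y)" for x
  proof -
    have "complex_of_real (IM M f x) = (LINT y|lborel. indicator {0..M} y *\<^sub>R complex_of_real (f x y))"
      unfolding IM_def set_lebesgue_integral_def integral_complex_of_real[symmetric] by (simp add: scaleR_conv_of_real)
    moreover have "(LINT y|lborel. Q x y) = (LINT y|lborel. (complex_of_real (indicator {-R..R} x) * cis (- x * \<xi>)) * (indicator {0..M} y *\<^sub>R complex_of_real (f x y)))"
      by (intro Bochner_Integration.integral_cong refl) (simp add: Q_def indicator_times scaleR_conv_of_real mult_ac)
    moreover have "\<dots> = (complex_of_real (indicator {-R..R} x) * cis (- x * \<xi>)) * (LINT y|lborel. indicator {0..M} y *\<^sub>R complex_of_real (f x y))"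
      by (rule integral_mult_right_zero)
    ultimately show ?thesis by (simp add: scaleR_conv_of_real mult_ac)
  qed
  have e2: "indicator {0..M} y *\<^sub>R trunc_pft f R (\<xi>, y) = (LINT x|lborel. Q x y)" for y
  proof -
    have "(LINT x|lborel. Q x y) = (LINT x|lborel. indicator {0..M} y *\<^sub>R (indicator {-R..R} x *\<^sub>R (complex_of_real (f x y) * cis (- x * \<xi>))))"
      by (intro Bochner_Integration.integral_cong refl) (simp add: Q_def indicator_times)
    also have "\<dots> = indicator {0..M} y *\<^sub>R (LINT x|lborel. indicator {-R..R} x *\<^sub>R (complex_of_real (f x y) * cis (- x * \<xi>)))"
      by (rule integral_scaleR_right)
    finally show ?thesis unfolding trunc_pft_def set_lebesgue_integral_def by simp
  qed
  have "trunc_ft (\<lambda>x. complex_of_real (IM M f x)) R \<xi> = (LINT x|lborel. LINT y|lborel. Q x y)"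
    unfolding trunc_ft_def set_lebesgue_integral_def e1 ..
  also have "\<dots> = (LINT y|lborel. LINT x|lborel. Q x y)"
    by (rule lborel_pair.Fubini_integral[OF Qi, symmetric])
  also have "\<dots> = (LINT y:{0..M}|lborel. trunc_pft f R (\<xi>, y))"
    unfolding set_lebesgue_integral_def e2 ..
  finally show "trunc_ft (\<lambda>x. complex_of_real (IM M f x)) R \<xi> = (LINT y:{0..M}|lborel. trunc_pft f R (\<xi>, y))" .
  show "set_integrable lborel {0..M} (\<lambda>y. trunc_pft f R (\<xi>, y))"
    unfolding set_integrable_def e2 by (rule lborel_pair.integrable_snd[OF Qi])
qed

lemma slice_F:
  fixes F :: "real \<times> real \<Rightarrow> complex"
  assumes "F \<in> borel_measurable (lborel \<Otimes>\<^sub>M lborel)"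
  shows "(\<lambda>y. F (\<xi>, y)) \<in> borel_measurable borel"
proof -
  have "(\<lambda>y::real. (\<xi>, y)) \<in> measurable lborel (lborel \<Otimes>\<^sub>M lborel)" by measurable
  from measurable_compose[OF this assms] show ?thesis by simp
qed

lemma h_spec:
  fixes f :: "real \<Rightarrow> real \<Rightarrow> real" and F :: "real \<times> real \<Rightarrow> complex"
  assumes M: "0 \<le> M"
    and fm: "(\<lambda>z. f (fst z) (snd z)) \<in> borel_measurable borel"
    and fL2: "(\<integral>\<^sup>+ z\<in>strip M. ennreal ((f (fst z) (snd z))^2) \<partial>lborel) < \<infinity>"
    and Fm: "F \<in> borel_measurable lborel"
    and FL2: "(\<integral>\<^sup>+ z\<in>strip M. ennreal ((cmod (F z))^2) \<partial>lborel) < \<infinity>"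
    and Flim: "((\<lambda>R. \<integral>\<^sup>+ z\<in>strip M. ennreal ((cmod (trunc_pft f R z - F z))^2) \<partial>lborel) \<longlongrightarrow> 0) at_top"
  shows "(\<lambda>\<xi>. LINT y:{0..M}|lborel. F (\<xi>, y)) \<in> borel_measurable lborel"
    and "(\<integral>\<^sup>+ \<xi>. ennreal ((cmod (LINT y:{0..M}|lborel. F (\<xi>, y)))^2) \<partial>lborel) < \<infinity>"
    and "((\<lambda>R. \<integral>\<^sup>+ \<xi>. ennreal ((cmod (trunc_ft (\<lambda>x. complex_of_real (IM M f x)) R \<xi> - (LINT y:{0..M}|lborel. F (\<xi>, y))))^2) \<partial>lborel) \<longlongrightarrow> 0) at_top"
    and "\<And>R. trunc_ft (\<lambda>x. complex_of_real (IM M f x)) R \<in> borel_measurable lborel"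
proof -
  have FmP[measurable]: "F \<in> borel_measurable (lborel \<Otimes>\<^sub>M lborel)" using Fm by (simp add: lborel_prod)
  note [measurable] = trunc_pft_measurable[OF fm]
  define h where "h \<xi> = (LINT y:{0..M}|lborel. F (\<xi>, y))" for \<xi>
  have hm[measurable]: "h \<in> borel_measurable lborel"
  proof -
    have "(\<lambda>(\<xi>, y). indicator {0..M} y *\<^sub>R F (\<xi>, y)) \<in> borel_measurable (lborel \<Otimes>\<^sub>M lborel)"
      by (simp add: case_prod_beta) measurable
    then have "(\<lambda>\<xi>. LINT y|lborel. indicator {0..M} y *\<^sub>R F (\<xi>, y)) \<in> borel_measurable lborel"
      by (rule lborel.borel_measurable_lebesgue_integral)
    then show ?thesis unfolding h_def[abs_def] set_lebesgue_integral_def .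
  qed
  then show "(\<lambda>\<xi>. LINT y:{0..M}|lborel. F (\<xi>, y)) \<in> borel_measurable lborel" unfolding h_def[abs_def] .
  have strF: "(\<integral>\<^sup>+ z\<in>strip M. ennreal ((cmod (G z))^2) \<partial>lborel)
      = (\<integral>\<^sup>+ \<xi>. (\<integral>\<^sup>+ y\<in>{0..M}. ennreal ((cmod (G (\<xi>, y)))^2) \<partial>lborel) \<partial>lborel)"
    if [measurable]: "G \<in> borel_measurable (lborel \<Otimes>\<^sub>M lborel)" for G :: "real \<times> real \<Rightarrow> complex"
    by (subst strip_nn_fst) auto
  have "(\<integral>\<^sup>+ \<xi>. ennreal ((cmod (h \<xi>))^2) \<partial>lborel)
      \<le> (\<integral>\<^sup>+ \<xi>. ennreal M * (\<integral>\<^sup>+ y\<in>{0..M}. ennreal ((cmod (F (\<xi>, y)))^2) \<partial>lborel) \<partial>lborel)"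
    unfolding h_def by (intro nn_integral_mono CSy slice_F[OF FmP] M)
  also have "\<dots> = ennreal M * (\<integral>\<^sup>+ z\<in>strip M. ennreal ((cmod (F z))^2) \<partial>lborel)"
    by (subst strF[OF FmP], rule nn_integral_cmult) measurable
  also have "\<dots> < \<infinity>" using FL2 by (simp add: ennreal_mult_less_top)
  finally show "(\<integral>\<^sup>+ \<xi>. ennreal ((cmod (LINT y:{0..M}|lborel. F (\<xi>, y)))^2) \<partial>lborel) < \<infinity>"
    unfolding h_def .
  have fub: "trunc_ft (\<lambda>x. complex_of_real (IM M f x)) R \<xi> = (LINT y:{0..M}|lborel. trunc_pft f R (\<xi>, y))" for R \<xi>
    by (rule trunc_ft_fubini(1)[OF fm fL2])
  show tm: "trunc_ft (\<lambda>x. complex_of_real (IM M f x)) R \<in> borel_measurable lborel" for R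
  proof -
    have "(\<lambda>(\<xi>, y). indicator {0..M} y *\<^sub>R trunc_pft f R (\<xi>, y)) \<in> borel_measurable (lborel \<Otimes>\<^sub>M lborel)"
      by (simp add: case_prod_beta) measurable
    then have "(\<lambda>\<xi>. LINT y|lborel. indicator {0..M} y *\<^sub>R trunc_pft f R (\<xi>, y)) \<in> borel_measurable lborel"
      by (rule lborel.borel_measurable_lebesgue_integral)
    then show ?thesis unfolding fub[abs_def] set_lebesgue_integral_def .
  qed
  have fin: "(\<integral>\<^sup>+ \<xi>. (\<integral>\<^sup>+ y\<in>{0..M}. ennreal ((cmod (F (\<xi>, y)))^2) \<partial>lborel) \<partial>lborel) \<noteq> \<infinity>"
    using FL2 strF[OF FmP] by simp
  have AEF: "AE \<xi> in lborel. (\<integral>\<^sup>+ y\<in>{0..M}. ennreal ((cmod (F (\<xi>, y)))^2) \<partial>lborel) \<noteq> \<infinity>"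
    by (rule nn_integral_PInf_AE[OF _ fin]) measurable
  have bnd: "(\<integral>\<^sup>+ \<xi>. ennreal ((cmod (trunc_ft (\<lambda>x. complex_of_real (IM M f x)) R \<xi> - h \<xi>))^2) \<partial>lborel)
      \<le> ennreal M * (\<integral>\<^sup>+ z\<in>strip M. ennreal ((cmod (trunc_pft f R z - F z))^2) \<partial>lborel)" for R
  proof -
    have "(\<integral>\<^sup>+ \<xi>. ennreal ((cmod (trunc_ft (\<lambda>x. complex_of_real (IM M f x)) R \<xi> - h \<xi>))^2) \<partial>lborel)
        \<le> (\<integral>\<^sup>+ \<xi>. ennreal M * (\<integral>\<^sup>+ y\<in>{0..M}. ennreal ((cmod (trunc_pft f R (\<xi>, y) - F (\<xi>, y)))^2) \<partial>lborel) \<partial>lborel)"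
    proof (rule nn_integral_mono_AE)
      show "AE \<xi> in lborel. ennreal ((cmod (trunc_ft (\<lambda>x. complex_of_real (IM M f x)) R \<xi> - h \<xi>))^2)
          \<le> ennreal M * (\<integral>\<^sup>+ y\<in>{0..M}. ennreal ((cmod (trunc_pft f R (\<xi>, y) - F (\<xi>, y)))^2) \<partial>lborel)"
        using AEF
      proof eventually_elim
        case (elim \<xi>)
        have Fi: "set_integrable lborel {0..M} (\<lambda>y. F (\<xi>, y))"
          unfolding set_integrable_def
        proof (rule L2_set_integrable)
          show "(\<lambda>y. F (\<xi>, y)) \<in> borel_measurable lborel" using slice_F[OF FmP] by simp
          show "emeasure lborel {0..M} < \<infinity>" using M by simp
        qed (use elim in \<open>auto simp: top.not_eq_extremum\<close>)
        have Ti: "set_integrable lborel {0..M} (\<lambda>y. trunc_pft f R (\<xi>, y))"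
          by (rule trunc_ft_fubini(2)[OF fm fL2])
        have "trunc_ft (\<lambda>x. complex_of_real (IM M f x)) R \<xi> - h \<xi> = (LINT y:{0..M}|lborel. trunc_pft f R (\<xi>, y) - F (\<xi>, y))"
          unfolding fub h_def by (rule set_integral_diff(2)[OF Ti Fi, symmetric])
        also have "ennreal ((cmod \<dots>)^2) \<le> ennreal M * (\<integral>\<^sup>+ y\<in>{0..M}. ennreal ((cmod (trunc_pft f R (\<xi>, y) - F (\<xi>, y)))^2) \<partial>lborel)"
        proof (rule CSy[OF _ M])
          have "(\<lambda>y. trunc_pft f R (\<xi>, y)) \<in> borel_measurable borel" by (rule slice_F) measurable
          then show "(\<lambda>y. trunc_pft f R (\<xi>, y) - F (\<xi>, y)) \<in> borel_measurable borel"
            using slice_F[OF FmP] by measurable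
        qed
        finally show ?case by simp
      qed
    qed
    also have "\<dots> = ennreal M * (\<integral>\<^sup>+ z\<in>strip M. ennreal ((cmod (trunc_pft f R z - F z))^2) \<partial>lborel)"
      by (subst strF, measurable, rule nn_integral_cmult) measurable
    finally show ?thesis .
  qed
  have lim2: "((\<lambda>R. ennreal M * (\<integral>\<^sup>+ z\<in>strip M. ennreal ((cmod (trunc_pft f R z - F z))^2) \<partial>lborel)) \<longlongrightarrow> ennreal M * 0) at_top"
    by (intro ennreal_tendsto_cmult Flim) simp
  show "((\<lambda>R. \<integral>\<^sup>+ \<xi>. ennreal ((cmod (trunc_ft (\<lambda>x. complex_of_real (IM M f x)) R \<xi> - (LINT y:{0..M}|lborel. F (\<xi>, y))))^2) \<partial>lborel) \<longlongrightarrow> 0) at_top"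
    unfolding h_def[symmetric]
  proof (rule tendsto_sandwich[OF _ _ tendsto_const])
    show "eventually (\<lambda>R. 0 \<le> (\<integral>\<^sup>+ \<xi>. ennreal ((cmod (trunc_ft (\<lambda>x. complex_of_real (IM M f x)) R \<xi> - h \<xi>))^2) \<partial>lborel)) at_top"
      by simp
    show "eventually (\<lambda>R. (\<integral>\<^sup>+ \<xi>. ennreal ((cmod (trunc_ft (\<lambda>x. complex_of_real (IM M f x)) R \<xi> - h \<xi>))^2) \<partial>lborel)
        \<le> ennreal M * (\<integral>\<^sup>+ z\<in>strip M. ennreal ((cmod (trunc_pft f R z - F z))^2) \<partial>lborel)) at_top"
      using bnd by simp
    show "((\<lambda>R. ennreal M * (\<integral>\<^sup>+ z\<in>strip M. ennreal ((cmod (trunc_pft f R z - F z))^2) \<partial>lborel)) \<longlongrightarrow> 0) at_top"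
      using lim2 by simp
  qed
qed

lemma powr_identities:
  fixes t a y X :: real
  assumes t: "0 < t"
  shows "t powr (5/3 + a) / (2*pi) * (1 / t powr (-1/3)) * (2 * (t powr (-1/3))^2 * X)
          = 1/pi * ((t powr (2/3 + a/2))^2 * X)"
    and "t powr (5/3 + a) / (2*pi) * (1 / t powr (-1/3)) * (2 * y^2 * X)
          = 1/pi * ((y * t powr (a/2) * t)^2 * X)"
proof -
  have g1: "1 / A = B" if "(A::real) * B = 1" for A B
    using that by (metis div_by_1 mult.commute nonzero_mult_div_cancel_left mult_zero_left zero_neq_one)
  have p1: "1 / t powr (-1/3) = t powr (1/3)"
    by (rule g1) (use t in \<open>simp add: powr_add[symmetric]\<close>)
  have p2: "(t powr (-1/3))^2 = t powr (-2/3)" using t by (simp add: power2_eq_square powr_add[symmetric])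
  have p3: "(t powr (2/3 + a/2))^2 = t powr (4/3 + a)" using t by (simp add: power2_eq_square powr_add[symmetric])
  have p4: "t powr (5/3 + a) * t powr (1/3) * t powr (-2/3) = t powr (4/3 + a)"
    using t by (simp add: powr_add[symmetric])
  have p5: "(y * t powr (a/2) * t)^2 = y^2 * t powr (2 + a)"
  proof -
    have q1: "(t powr (a/2))^2 = t powr a" using t by (simp add: power2_eq_square powr_add[symmetric])
    have q2: "t powr (2 + a) = t^2 * t powr a" using t by (simp add: powr_add powr_numeral)
    show ?thesis unfolding q2 power_mult_distrib q1 by (simp add: mult_ac)
  qed
  have p6: "t powr (5/3 + a) * t powr (1/3) = t powr (2 + a)"
    using t by (simp add: powr_add[symmetric])
  show "t powr (5/3 + a) / (2*pi) * (1 / t powr (-1/3)) * (2 * (t powr (-1/3))^2 * X)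
          = 1/pi * ((t powr (2/3 + a/2))^2 * X)"
  proof -
    have g: "A / (2*pi) * B * (2 * C * X) = 1/pi * ((A * B * C) * X)" for A B C :: real
      by (simp add: field_simps)
    show ?thesis unfolding p1 p2 p3 g p4 ..
  qed
  show "t powr (5/3 + a) / (2*pi) * (1 / t powr (-1/3)) * (2 * y^2 * X)
          = 1/pi * ((y * t powr (a/2) * t)^2 * X)"
  proof -
    have g: "A / (2*pi) * B * (2 * Y * X) = 1/pi * (Y * (A * B) * X)" for A B Y :: real
      by (simp add: field_simps)
    show ?thesis unfolding p1 p5 g p6 by (simp add: mult_ac)
  qed
qed

lemma gass: "(e::ennreal) * X = p * Y \<Longrightarrow> e * (X * i) = p * (Y * i)"
  by (metis mult.assoc)

lemma main_pt:
  fixes F :: "real \<times> real \<Rightarrow> complex" and a M \<xi> :: real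
  assumes FmP: "F \<in> borel_measurable (lborel \<Otimes>\<^sub>M lborel)" and M: "0 \<le> M"
  shows "ennreal (\<bar>\<xi>\<bar> powr (5/3 + a) * (cmod (LINT y:{0..M}|lborel. F (\<xi>, y)))^2 / (2*pi))
     \<le> ennreal (1/pi) * (\<integral>\<^sup>+ y\<in>{0..M}. ennreal ((\<bar>\<xi>\<bar> powr (2/3 + a/2))^2 * (cmod (F (\<xi>,y)))^2
            + (y * \<bar>\<xi>\<bar> powr (a/2) * \<bar>\<xi>\<bar>)^2 * (cmod (F (\<xi>,y)))^2) \<partial>lborel)"
proof (cases "\<xi> = 0")
  case True then show ?thesis by simp
next
  case False
  define t where "t = \<bar>\<xi>\<bar>"
  have t: "0 < t" using False by (simp add: t_def)
  define d where "d = t powr (-1/3)"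
  have d: "0 < d" using t by (simp add: d_def)
  define u where "u y = F (\<xi>, y)" for y
  have um[measurable]: "u \<in> borel_measurable borel" unfolding u_def[abs_def] by (rule slice_F[OF FmP])
  define c where "c = t powr (5/3 + a) / (2*pi)"
  have c: "0 \<le> c" by (simp add: c_def)
  have "ennreal (cmod (LINT y:{0..M}|lborel. u y)) \<le> (\<integral>\<^sup>+ y. ennreal (norm (indicator {0..M} y *\<^sub>R u y)) \<partial>lborel)"
    unfolding set_lebesgue_integral_def by (rule norm_integral_le_nn)
  also have "\<dots> = (\<integral>\<^sup>+ y. ennreal (indicator {0..M} y / (d + y)) * ennreal (indicator {0..M} y * (d + y) * cmod (u y)) \<partial>lborel)"
  proof (intro nn_integral_cong)
    fix y
    show "ennreal (norm (indicator {0..M} y *\<^sub>R u y)) = ennreal (indicator {0..M} y / (d + y)) * ennreal (indicator {0..M} y * (d + y) * cmod (u y))"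
    proof (cases "y \<in> {0..M}")
      case True
      then have "0 < d + y" using d by auto
      then show ?thesis using True by (simp add: ennreal_mult[symmetric])
    next
      case False then show ?thesis by simp
    qed
  qed
  finally have A: "(ennreal (cmod (LINT y:{0..M}|lborel. u y)))^2 \<le> (\<integral>\<^sup>+ y. ennreal (indicator {0..M} y / (d + y)) * ennreal (indicator {0..M} y * (d + y) * cmod (u y)) \<partial>lborel)^2"
    by (rule power_mono) simp
  also have "\<dots> \<le> (\<integral>\<^sup>+ y. (ennreal (indicator {0..M} y / (d + y)))^2 \<partial>lborel) * (\<integral>\<^sup>+ y. (ennreal (indicator {0..M} y * (d + y) * cmod (u y)))^2 \<partial>lborel)"
    by (rule Cauchy_Schwarz_nn_integral) measurable
  also have "(\<integral>\<^sup>+ y. (ennreal (indicator {0..M} y / (d + y)))^2 \<partial>lborel) \<le> ennreal (1/d)"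
  proof -
    have "(\<integral>\<^sup>+ y. (ennreal (indicator {0..M} y / (d + y)))^2 \<partial>lborel) = (\<integral>\<^sup>+ y\<in>{0..M}. ennreal (1 / (d + y)^2) \<partial>lborel)"
    proof (intro nn_integral_cong)
      fix y
      show "(ennreal (indicator {0..M} y / (d + y)))^2 = ennreal (1 / (d + y)^2) * indicator {0..M} y"
      proof (cases "y \<in> {0..M}")
        case True
        then have "0 \<le> 1 / (d + y)" using d by auto
        then have "(ennreal (1 / (d + y)))^2 = ennreal ((1 / (d + y))^2)" by (metis ennreal_power)
        then show ?thesis using True by (simp add: power_divide)
      next
        case False then show ?thesis by simp
      qed
    qed
    also have "\<dots> \<le> ennreal (1/d)" by (rule inv_sq_integral[OF d M])
    finally show ?thesis .
  qed
  also have "(\<integral>\<^sup>+ y. (ennreal (indicator {0..M} y * (d + y) * cmod (u y)))^2 \<partial>lborel)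
      \<le> (\<integral>\<^sup>+ y\<in>{0..M}. ennreal (2 * d^2 * (cmod (u y))^2 + 2 * y^2 * (cmod (u y))^2) \<partial>lborel)"
  proof (intro nn_integral_mono)
    fix y
    show "(ennreal (indicator {0..M} y * (d + y) * cmod (u y)))^2 \<le> ennreal (2 * d^2 * (cmod (u y))^2 + 2 * y^2 * (cmod (u y))^2) * indicator {0..M} y"
    proof (cases "y \<in> {0..M}")
      case True
      have "((d + y) * cmod (u y))^2 \<le> 2 * d^2 * (cmod (u y))^2 + 2 * y^2 * (cmod (u y))^2"
      proof -
        have "(d + y)^2 \<le> 2 * d^2 + 2 * y^2"
          using zero_le_power2[of "d - y"] unfolding power2_sum power2_diff by linarith
        then have "(d + y)^2 * (cmod (u y))^2 \<le> (2 * d^2 + 2 * y^2) * (cmod (u y))^2"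
          by (rule mult_right_mono) simp
        moreover have "((d + y) * cmod (u y))^2 = (d + y)^2 * (cmod (u y))^2" by (rule power_mult_distrib)
        moreover have "(2 * d^2 + 2 * y^2) * (cmod (u y))^2 = 2 * d^2 * (cmod (u y))^2 + 2 * y^2 * (cmod (u y))^2"
          by (simp add: distrib_right)
        ultimately show ?thesis by simp
      qed
      note ineq = this
      have nn: "0 \<le> (d + y) * cmod (u y)" using True d by auto
      have "(ennreal ((d + y) * cmod (u y)))^2 = ennreal (((d + y) * cmod (u y))^2)" using nn by (metis ennreal_power)
      also have "\<dots> \<le> ennreal (2 * d^2 * (cmod (u y))^2 + 2 * y^2 * (cmod (u y))^2)" by (rule ennreal_leI) (rule ineq)
      finally show ?thesis using True by simp
    next
      case False then show ?thesis by simp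
    qed
  qed
  finally have B: "(ennreal (cmod (LINT y:{0..M}|lborel. u y)))^2
      \<le> ennreal (1/d) * (\<integral>\<^sup>+ y\<in>{0..M}. ennreal (2 * d^2 * (cmod (u y))^2 + 2 * y^2 * (cmod (u y))^2) \<partial>lborel)"
    by (rule order_trans) (auto intro!: mult_right_mono mult_left_mono)
  have "ennreal (\<bar>\<xi>\<bar> powr (5/3 + a) * (cmod (LINT y:{0..M}|lborel. F (\<xi>, y)))^2 / (2*pi))
      = ennreal c * (ennreal (cmod (LINT y:{0..M}|lborel. u y)))^2"
  proof -
    define X where "X = cmod (LINT y:{0..M}|lborel. u y)"
    have "\<bar>\<xi>\<bar> powr (5/3 + a) * (cmod (LINT y:{0..M}|lborel. F (\<xi>, y)))^2 / (2*pi) = c * X^2"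
      by (simp add: c_def t_def u_def X_def)
    moreover have "ennreal (c * X^2) = ennreal c * ennreal (X^2)" using c by (simp add: ennreal_mult)
    moreover have "ennreal (X^2) = (ennreal X)^2" by (metis ennreal_power norm_ge_zero X_def)
    ultimately show ?thesis by (simp add: X_def)
  qed
  also have "\<dots> \<le> ennreal c * (ennreal (1/d) * (\<integral>\<^sup>+ y\<in>{0..M}. ennreal (2 * d^2 * (cmod (u y))^2 + 2 * y^2 * (cmod (u y))^2) \<partial>lborel))"
    by (rule mult_left_mono[OF B]) simp
  also have "\<dots> = ennreal (c / d) * (\<integral>\<^sup>+ y\<in>{0..M}. ennreal (2 * d^2 * (cmod (u y))^2 + 2 * y^2 * (cmod (u y))^2) \<partial>lborel)"
  proof -
    have "ennreal c * ennreal (1/d) = ennreal (c / d)"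
      using c d by (subst ennreal_mult[symmetric]) auto
    then show ?thesis by (simp only: mult.assoc[symmetric])
  qed
  also have "\<dots> = (\<integral>\<^sup>+ y. ennreal (c / d) * (ennreal (2 * d^2 * (cmod (u y))^2 + 2 * y^2 * (cmod (u y))^2) * indicator {0..M} y) \<partial>lborel)"
    by (rule nn_integral_cmult[symmetric]) measurable
  also have "\<dots> = (\<integral>\<^sup>+ y. ennreal (1/pi) * (ennreal ((\<bar>\<xi>\<bar> powr (2/3 + a/2))^2 * (cmod (F (\<xi>,y)))^2
            + (y * \<bar>\<xi>\<bar> powr (a/2) * \<bar>\<xi>\<bar>)^2 * (cmod (F (\<xi>,y)))^2) * indicator {0..M} y) \<partial>lborel)"
  proof (intro nn_integral_cong)
    fix y
    define A where "A = 2 * d^2 * (cmod (u y))^2 + 2 * y^2 * (cmod (u y))^2"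
    define B where "B = (t powr (2/3 + a/2))^2 * (cmod (u y))^2 + (y * t powr (a/2) * t)^2 * (cmod (u y))^2"
    have "c / d * A = c * (1/d) * (2 * d^2 * (cmod (u y))^2) + c * (1/d) * (2 * y^2 * (cmod (u y))^2)"
      unfolding A_def by (simp only: distrib_left times_divide_eq_right mult_1_right)
    also have "\<dots> = 1/pi * ((t powr (2/3 + a/2))^2 * (cmod (u y))^2) + 1/pi * ((y * t powr (a/2) * t)^2 * (cmod (u y))^2)"
      unfolding c_def d_def powr_identities(1)[OF t, where X="(cmod (u y))^2"] powr_identities(2)[OF t, where y=y and X="(cmod (u y))^2"] ..
    finally have eq: "c / d * A = 1/pi * B" unfolding B_def by (simp only: distrib_left)
    have A0: "0 \<le> A" by (simp add: A_def)
    have B0: "0 \<le> B" by (simp add: B_def)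
    have "ennreal (c / d) * ennreal A = ennreal (1/pi) * ennreal B"
    proof -
      have "ennreal (c / d) * ennreal A = ennreal (c / d * A)" using c d A0 by (intro ennreal_mult[symmetric]) simp_all
      also have "\<dots> = ennreal (1/pi * B)" by (simp only: eq)
      also have "\<dots> = ennreal (1/pi) * ennreal B" using B0 by (intro ennreal_mult) simp_all
      finally show ?thesis .
    qed
    note eqA = this[unfolded A_def B_def t_def u_def]
    show "ennreal (c / d) * (ennreal (2 * d^2 * (cmod (u y))^2 + 2 * y^2 * (cmod (u y))^2) * indicator {0..M} y)
        = ennreal (1/pi) * (ennreal ((\<bar>\<xi>\<bar> powr (2/3 + a/2))^2 * (cmod (F (\<xi>,y)))^2
            + (y * \<bar>\<xi>\<bar> powr (a/2) * \<bar>\<xi>\<bar>)^2 * (cmod (F (\<xi>,y)))^2) * indicator {0..M} y)"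
      unfolding u_def by (rule gass[OF eqA])
  qed
  also have "\<dots> = ennreal (1/pi) * (\<integral>\<^sup>+ y\<in>{0..M}. ennreal ((\<bar>\<xi>\<bar> powr (2/3 + a/2))^2 * (cmod (F (\<xi>,y)))^2
            + (y * \<bar>\<xi>\<bar> powr (a/2) * \<bar>\<xi>\<bar>)^2 * (cmod (F (\<xi>,y)))^2) \<partial>lborel)"
    using slice_F[OF FmP, measurable] by (intro nn_integral_cmult) measurable
  finally show ?thesis .
qed

lemma wsq_eq:
  assumes "wsq M w G < \<infinity>"
  shows "wsq M w G = ennreal (2*pi * (wnorm M w G)^2)"
proof -
  have "(wnorm M w G)^2 = enn2real (wsq M w G) / (2*pi)"
    unfolding wnorm_def by (simp add: enn2real_nonneg)
  then have "2*pi * (wnorm M w G)^2 = enn2real (wsq M w G)" by simp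
  then show ?thesis using assms by (simp add: less_top[symmetric])
qed

lemma wnorm_nonneg: "0 \<le> wnorm M w G" unfolding wnorm_def by simp

theorem proposition2p4:
  fixes M :: real
  assumes "M > 0"
  shows "\<exists>C>0. \<forall>a\<ge>0. \<forall>f G3 G4 G5. inX M a f G3 G4 G5 \<longrightarrow>
    (\<integral>\<^sup>+ \<xi>. ennreal (\<bar>\<xi>\<bar> powr (5/3 + a) * (cmod (ft1 (\<lambda>x. complex_of_real (IM M f x)) \<xi>))\<^sup>2 / (2 * pi)) \<partial>lborel)
      \<le> ennreal ((C * Ynorm M a f G3 G4 G5)\<^sup>2)"
proof (intro exI[of _ 2] conjI allI impI)
  show "(0::real) < 2" by simp
  fix a :: real and f G3 G4 G5
  assume a: "0 \<le> a" and X: "inX M a f G3 G4 G5"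
  have M0: "0 \<le> M" using assms by simp
  define w1 where "w1 = (\<lambda>z::real\<times>real. snd z * \<bar>fst z\<bar> powr (a/2) * \<bar>fst z\<bar>)"
  define w2 where "w2 = (\<lambda>z::real\<times>real. \<bar>fst z\<bar> powr (2/3 + a/2))"
  have fmL: "(\<lambda>z. f (fst z) (snd z)) \<in> borel_measurable lborel"
    and fL2: "(\<integral>\<^sup>+ z \<in> strip M. ennreal ((f (fst z) (snd z))\<^sup>2) \<partial>lborel) < \<infinity>"
    and wf1: "wfin M w1 (pft M f)" and wf2: "wfin M w2 (pft M f)"
    using X unfolding inX_def w1_def w2_def by auto
  have fm: "(\<lambda>z. f (fst z) (snd z)) \<in> borel_measurable borel" using fmL by simp
  define F where "F = pft M f"
  have Fspec: "F \<in> borel_measurable lborel \<and>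
      (\<integral>\<^sup>+ z \<in> strip M. ennreal ((cmod (F z))\<^sup>2) \<partial>lborel) < \<infinity> \<and>
      ((\<lambda>R. \<integral>\<^sup>+ z \<in> strip M. ennreal ((cmod (trunc_pft f R z - F z))\<^sup>2) \<partial>lborel) \<longlongrightarrow> 0) at_top"
    unfolding F_def pft_def by (rule someI_ex[OF pft_exists[OF fm fL2]])
  then have Fm: "F \<in> borel_measurable lborel"
    and FL2: "(\<integral>\<^sup>+ z \<in> strip M. ennreal ((cmod (F z))\<^sup>2) \<partial>lborel) < \<infinity>"
    and Flim: "((\<lambda>R. \<integral>\<^sup>+ z \<in> strip M. ennreal ((cmod (trunc_pft f R z - F z))\<^sup>2) \<partial>lborel) \<longlongrightarrow> 0) at_top"
    by auto
  have FmP[measurable]: "F \<in> borel_measurable (lborel \<Otimes>\<^sub>M lborel)" using Fm by (simp add: lborel_prod)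
  define g where "g = (\<lambda>x. complex_of_real (IM M f x))"
  define h where "h \<xi> = (LINT y:{0..M}|lborel. F (\<xi>, y))" for \<xi>
  note hs = h_spec[OF M0 fm fL2 Fm FL2 Flim]
  have hm: "h \<in> borel_measurable lborel" using hs(1) unfolding h_def[abs_def] .
  have ex: "\<exists>h'. h' \<in> borel_measurable lborel \<and>
      (\<integral>\<^sup>+ \<xi>. ennreal ((cmod (h' \<xi>))\<^sup>2) \<partial>lborel) < \<infinity> \<and>
      ((\<lambda>R. \<integral>\<^sup>+ \<xi>. ennreal ((cmod (trunc_ft g R \<xi> - h' \<xi>))\<^sup>2) \<partial>lborel) \<longlongrightarrow> 0) at_top"
  proof (rule exI[of _ h], intro conjI)
    show "h \<in> borel_measurable lborel" by (rule hm)
    show "(\<integral>\<^sup>+ \<xi>. ennreal ((cmod (h \<xi>))\<^sup>2) \<partial>lborel) < \<infinity>" using hs(2) unfolding h_def .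
    show "((\<lambda>R. \<integral>\<^sup>+ \<xi>. ennreal ((cmod (trunc_ft g R \<xi> - h \<xi>))\<^sup>2) \<partial>lborel) \<longlongrightarrow> 0) at_top"
      using hs(3) unfolding h_def g_def .
  qed
  have ftspec: "ft1 g \<in> borel_measurable lborel \<and>
      (\<integral>\<^sup>+ \<xi>. ennreal ((cmod (ft1 g \<xi>))\<^sup>2) \<partial>lborel) < \<infinity> \<and>
      ((\<lambda>R. \<integral>\<^sup>+ \<xi>. ennreal ((cmod (trunc_ft g R \<xi> - ft1 g \<xi>))\<^sup>2) \<partial>lborel) \<longlongrightarrow> 0) at_top"
    unfolding ft1_def by (rule someI_ex[OF ex])
  have AEeq: "AE \<xi> in lborel. ft1 g \<xi> = h \<xi>"
  proof (rule L2_limit_unique[where T="trunc_ft g"])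
    show "trunc_ft g R \<in> borel_measurable borel" for R using hs(4)[of R] unfolding g_def by simp
    show "ft1 g \<in> borel_measurable borel" using ftspec by simp
    show "h \<in> borel_measurable borel" using hm by simp
    show "((\<lambda>R. \<integral>\<^sup>+ \<xi>. ennreal ((cmod (trunc_ft g R \<xi> - ft1 g \<xi>))\<^sup>2) \<partial>lborel) \<longlongrightarrow> 0) at_top"
      using ftspec by simp
    show "((\<lambda>R. \<integral>\<^sup>+ \<xi>. ennreal ((cmod (trunc_ft g R \<xi> - h \<xi>))\<^sup>2) \<partial>lborel) \<longlongrightarrow> 0) at_top"
      using hs(3) unfolding h_def g_def .
  qed
  have w1fin: "wsq M w1 F < \<infinity>" and w2fin: "wsq M w2 F < \<infinity>"
    using wf1 wf2 unfolding wfin_def F_def by auto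
  define n1 where "n1 = wnorm M w1 F"
  define n2 where "n2 = wnorm M w2 F"
  have Y: "Ynorm M a f G3 G4 G5 = n1 + n2 + wnorm M (\<lambda>z. 1) G3 + wnorm M (\<lambda>z. 1) G4 + wnorm M (\<lambda>z. 1) G5"
    unfolding Ynorm_def n1_def n2_def w1_def w2_def F_def ..
  have "(\<integral>\<^sup>+ \<xi>. ennreal (\<bar>\<xi>\<bar> powr (5/3 + a) * (cmod (ft1 g \<xi>))\<^sup>2 / (2 * pi)) \<partial>lborel)
      = (\<integral>\<^sup>+ \<xi>. ennreal (\<bar>\<xi>\<bar> powr (5/3 + a) * (cmod (LINT y:{0..M}|lborel. F (\<xi>, y)))\<^sup>2 / (2 * pi)) \<partial>lborel)"
    using AEeq by (intro nn_integral_cong_AE) (auto simp: h_def)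
  also have "\<dots> \<le> (\<integral>\<^sup>+ \<xi>. ennreal (1/pi) * (\<integral>\<^sup>+ y\<in>{0..M}. ennreal ((w2 (\<xi>, y))^2 * (cmod (F (\<xi>,y)))^2
            + (w1 (\<xi>, y))^2 * (cmod (F (\<xi>,y)))^2) \<partial>lborel) \<partial>lborel)"
    by (intro nn_integral_mono, simp only: w1_def w2_def fst_conv snd_conv) (rule main_pt[OF FmP M0])
  also have "\<dots> = ennreal (1/pi) * (\<integral>\<^sup>+ z\<in>strip M. ennreal ((w2 z)^2 * (cmod (F z))^2 + (w1 z)^2 * (cmod (F z))^2) \<partial>lborel)"
  proof -
    have [measurable]: "w1 \<in> borel_measurable (lborel \<Otimes>\<^sub>M lborel)" "w2 \<in> borel_measurable (lborel \<Otimes>\<^sub>M lborel)"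
      unfolding w1_def w2_def by measurable
    show ?thesis
      by (subst strip_nn_fst, measurable, rule nn_integral_cmult) measurable
  qed
  also have "(\<integral>\<^sup>+ z\<in>strip M. ennreal ((w2 z)^2 * (cmod (F z))^2 + (w1 z)^2 * (cmod (F z))^2) \<partial>lborel)
      = wsq M w2 F + wsq M w1 F"
  proof -
    have [measurable]: "w1 \<in> borel_measurable borel" "w2 \<in> borel_measurable borel" "F \<in> borel_measurable borel"
      using Fm unfolding w1_def w2_def by (auto intro: unpairP)
    have "(\<integral>\<^sup>+ z\<in>strip M. ennreal ((w2 z)^2 * (cmod (F z))^2 + (w1 z)^2 * (cmod (F z))^2) \<partial>lborel)
        = (\<integral>\<^sup>+ z. ennreal ((w2 z)^2 * (cmod (F z))^2) * indicator (strip M) z + ennreal ((w1 z)^2 * (cmod (F z))^2) * indicator (strip M) z \<partial>lborel)"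
      by (intro nn_integral_cong) (simp add: ennreal_plus distrib_right)
    also have "\<dots> = (\<integral>\<^sup>+ z\<in>strip M. ennreal ((w2 z)^2 * (cmod (F z))^2) \<partial>lborel) + (\<integral>\<^sup>+ z\<in>strip M. ennreal ((w1 z)^2 * (cmod (F z))^2) \<partial>lborel)"
      by (rule nn_integral_add) measurable
    finally show ?thesis unfolding wsq_def .
  qed
  also have "wsq M w2 F + wsq M w1 F = ennreal (2*pi * n2^2) + ennreal (2*pi * n1^2)"
    using wsq_eq[OF w1fin] wsq_eq[OF w2fin] unfolding n1_def n2_def by simp
  also have "ennreal (1/pi) * (ennreal (2*pi * n2^2) + ennreal (2*pi * n1^2)) = ennreal (2 * n1^2 + 2 * n2^2)"
  proof -
    have "ennreal (1/pi) * (ennreal (2*pi * n2^2) + ennreal (2*pi * n1^2)) = ennreal (1/pi * (2*pi * n2^2 + 2*pi * n1^2))"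
      by (simp add: ennreal_plus[symmetric] ennreal_mult[symmetric] del: ennreal_plus)
    also have "1/pi * (2*pi * n2^2 + 2*pi * n1^2) = 2 * n1^2 + 2 * n2^2"
      by (simp add: field_simps)
    finally show ?thesis .
  qed
  also have "ennreal (2 * n1^2 + 2 * n2^2) \<le> ennreal ((2 * Ynorm M a f G3 G4 G5)\<^sup>2)"
  proof (rule ennreal_leI)
    have n: "0 \<le> n1" "0 \<le> n2" "0 \<le> wnorm M (\<lambda>z. 1) G3" "0 \<le> wnorm M (\<lambda>z. 1) G4" "0 \<le> wnorm M (\<lambda>z. 1) G5"
      unfolding n1_def n2_def by (simp_all add: wnorm_nonneg)
    have "n1 + n2 \<le> Ynorm M a f G3 G4 G5" unfolding Y using n by linarith
    then have "(n1 + n2)^2 \<le> (Ynorm M a f G3 G4 G5)^2" using n by (intro power_mono) auto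
    moreover have "n1^2 + n2^2 \<le> (n1 + n2)^2" using n by (simp add: power2_sum)
    moreover have "(2 * Ynorm M a f G3 G4 G5)\<^sup>2 = 4 * (Ynorm M a f G3 G4 G5)\<^sup>2"
      by (simp add: power_mult_distrib)
    moreover have "0 \<le> (Ynorm M a f G3 G4 G5)\<^sup>2" by simp
    ultimately show "2 * n1^2 + 2 * n2^2 \<le> (2 * Ynorm M a f G3 G4 G5)\<^sup>2"
      by linarith
  qed
  finally show "(\<integral>\<^sup>+ \<xi>. ennreal (\<bar>\<xi>\<bar> powr (5/3 + a) * (cmod (ft1 (\<lambda>x. complex_of_real (IM M f x)) \<xi>))\<^sup>2 / (2 * pi)) \<partial>lborel)
      \<le> ennreal ((2 * Ynorm M a f G3 G4 G5)\<^sup>2)" unfolding g_def .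
qed

end
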